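(* For every $m\in\mathbb{N}$ and $\alpha\in\mathcal{C}_m$, the rank of $W_\alpha$ is $m$ if all $\alpha_i$ are even, and $m-\#^{\mathsf{odd}}_\alpha+1$ otherwise.
   Context: $\mathcal{C}_m$ is the set of compositions of $m$ (tuples $\alpha=(\alpha_1,\dots,\alpha_N)$ of positive integers summing to $m$); $\#^{\mathsf{odd}}_\alpha$ is the number of odd entries. Let $E^j:[0,1]\to\mathbb{R}^m$, $t\mapsto te_j$; concatenation $(X\star Y)(t)=X(2t)$ for $t<\frac12$, $X(1)+Y(2t-1)$ for $t\ge\frac12$; $\mathsf{Ax}^{\alpha,i}=E^{\alpha_1+\dots+\alpha_{i-1}+1}\star\dots\star E^{\alpha_1+\dots+\alpha_i}$. $\sigma(X)=1\oplus(X(1)-X(0))\oplus\big(\int_{0<t_1<t_2<1}\dot X_a(t_1)\dot X_b(t_2)dt_1dt_2\big)_{a,b}$ is the $2$-truncated signature, in the free nilpotent Lie group $\mathcal{G}_{m,2}=\exp(\mathfrak{g}_{m,2})\subset T_{m,2}=\mathbb{R}\oplus\mathbb{R}^m\oplus\mathbb{R}^{m\times m}$ (truncated tensor product, $\exp(\mathbf{z})=1+\mathbf{z}+\mathbf{z}^{\otimes2}/2$, $\log=\exp^{-1}$). The barycenter of $\mathbf{x}\in\mathcal{G}_{m,2}^N$ is the unique $\mathbf{m}$ with $\sum_i\log(\mathbf{m}^{-1}\mathbf{x}_i)=0$, and $W_\alpha\in\mathbb{R}^{m\times m}$ is the level-2 component of $\mathsf{bary}(\sigma(\mathsf{Ax}^{\alpha,1}),\dots,\sigma(\mathsf{Ax}^{\alpha,N}))$.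 *)

theory Defs
  imports "HOL-Analysis.Henstock_Kurzweil_Integration" "Jordan_Normal_Form.DL_Rank"
begin

definition compositions :: "nat \<Rightarrow> nat list set" where
  "compositions m = {\<alpha>. (\<forall>x\<in>set \<alpha>. 0 < x) \<and> sum_list \<alpha> = m}"

definition num_odd :: "nat list \<Rightarrow> nat" where
  "num_odd \<alpha> = length (filter odd \<alpha>)"

text \<open>Coordinates are indexed by 1..m; an element is (level 0, level 1, level 2).\<close>

type_synonym tens2 = "real \<times> (nat \<Rightarrow> real) \<times> (nat \<Rightarrow> nat \<Rightarrow> real)"

definition T2 :: "nat \<Rightarrow> tens2 set" where
  "T2 m = {(c, v, A). (\<forall>j. j \<notin> {1..m} \<longrightarrow> v j = 0) \<and>
                      (\<forall>a b. a \<notin> {1..m} \<or> b \<notin> {1..m} \<longrightarrow> A a b = 0)}"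

definition tzero :: tens2 where "tzero = (0, (\<lambda>_. 0), (\<lambda>_ _. 0))"
definition tone :: tens2 where "tone = (1, (\<lambda>_. 0), (\<lambda>_ _. 0))"

definition tadd :: "tens2 \<Rightarrow> tens2 \<Rightarrow> tens2" where
  "tadd x y = (case x of (x0, x1, x2) \<Rightarrow> case y of (y0, y1, y2) \<Rightarrow>
      (x0 + y0, \<lambda>a. x1 a + y1 a, \<lambda>a b. x2 a b + y2 a b))"

definition tscale :: "real \<Rightarrow> tens2 \<Rightarrow> tens2" where
  "tscale r x = (case x of (x0, x1, x2) \<Rightarrow> (r * x0, \<lambda>a. r * x1 a, \<lambda>a b. r * x2 a b))"

definition tmult :: "tens2 \<Rightarrow> tens2 \<Rightarrow> tens2" where
  "tmult x y = (case x of (x0, x1, x2) \<Rightarrow> case y of (y0, y1, y2) \<Rightarrow>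
      (x0 * y0, \<lambda>a. x0 * y1 a + x1 a * y0, \<lambda>a b. x0 * y2 a b + x1 a * y1 b + x2 a b * y0))"

definition tsum :: "tens2 list \<Rightarrow> tens2" where
  "tsum xs = foldr tadd xs tzero"

definition tinv :: "tens2 \<Rightarrow> tens2" where
  "tinv x = (THE y. tmult x y = tone \<and> tmult y x = tone)"

definition texp :: "tens2 \<Rightarrow> tens2" where
  "texp z = tadd tone (tadd z (tscale (1/2) (tmult z z)))"

text \<open>Free 2-step nilpotent Lie algebra g_{m,2} = R^m + [R^m,R^m] inside T_{m,2}:
  level 0 vanishes, level 1 arbitrary, level 2 in the span of the brackets
  e_a\<otimes>e_b - e_b\<otimes>e_a, i.e. antisymmetric.\<close>
definition g2 :: "nat \<Rightarrow> tens2 set" where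
  "g2 m = {(c, v, A) \<in> T2 m. c = 0 \<and> (\<forall>a b. A a b = - A b a)}"

definition G2 :: "nat \<Rightarrow> tens2 set" where
  "G2 m = texp ` g2 m"

definition tlog :: "nat \<Rightarrow> tens2 \<Rightarrow> tens2" where
  "tlog m y = (THE z. z \<in> g2 m \<and> texp z = y)"

definition bary :: "nat \<Rightarrow> tens2 list \<Rightarrow> tens2" where
  "bary m xs = (THE mm. mm \<in> G2 m \<and> tsum (map (\<lambda>x. tlog m (tmult (tinv mm) x)) xs) = tzero)"

type_synonym rpath = "real \<Rightarrow> nat \<Rightarrow> real"

definition Epath :: "nat \<Rightarrow> rpath" where
  "Epath j = (\<lambda>t k. if k = j then t else 0)"

definition pconcat :: "rpath \<Rightarrow> rpath \<Rightarrow> rpath" (infixr "\<star>" 65) where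
  "pconcat X Y = (\<lambda>t. if t < 1/2 then X (2 * t) else (\<lambda>k. X 1 k + Y (2 * t - 1) k))"

fun axis_concat :: "nat list \<Rightarrow> rpath" where
  "axis_concat [] = (\<lambda>t k. 0)"
| "axis_concat [j] = Epath j"
| "axis_concat (j # js) = Epath j \<star> axis_concat js"

text \<open>Ax^{\<alpha>,i} for 1 \<le> i \<le> N (alpha stored as a 0-indexed list).\<close>
definition Ax :: "nat list \<Rightarrow> nat \<Rightarrow> rpath" where
  "Ax \<alpha> i = (let s = sum_list (take (i - 1) \<alpha>) in axis_concat [s + 1 ..< s + \<alpha> ! (i - 1) + 1])"

definition sig2 :: "rpath \<Rightarrow> tens2" where
  "sig2 X = (1, \<lambda>a. X 1 a - X 0 a,
     \<lambda>a b. integral {p :: real \<times> real. 0 < fst p \<and> fst p < snd p \<and> snd p < 1}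
               (\<lambda>p. deriv (\<lambda>t. X t a) (fst p) * deriv (\<lambda>t. X t b) (snd p)))"

definition W :: "nat list \<Rightarrow> nat \<Rightarrow> nat \<Rightarrow> real" where
  "W \<alpha> = snd (snd (bary (sum_list \<alpha>) (map (\<lambda>i. sig2 (Ax \<alpha> i)) [1 ..< length \<alpha> + 1])))"

text \<open>W_\<alpha> as an m x m JNF matrix (entry (i,j) for 0-based i,j is W_\<alpha>(i+1,j+1)).\<close>
definition W_mat :: "nat \<Rightarrow> nat list \<Rightarrow> real Matrix.mat" where
  "W_mat m \<alpha> = Matrix.mat m m (\<lambda>(i, j). W \<alpha> (i + 1) (j + 1))"

end

theory Submission
  imports Defs "HOL-Analysis.Analysis"
begin

lemma texp_simp: "texp (0, v, A) = (1, v, \<lambda>a b. A a b + v a * v b / 2)"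
  unfolding texp_def tadd_def tone_def tscale_def tmult_def by auto

lemma g2_D: "z \<in> g2 m \<Longrightarrow> \<exists>v A. z = (0, v, A) \<and> (\<forall>j. j \<notin> {1..m} \<longrightarrow> v j = 0) \<and>
   (\<forall>a b. a \<notin> {1..m} \<or> b \<notin> {1..m} \<longrightarrow> A a b = 0) \<and> (\<forall>a b. A a b = - A b a)"
  unfolding g2_def T2_def by blast

lemma g2_I: "(\<forall>j. j \<notin> {1..m} \<longrightarrow> v j = 0) \<Longrightarrow>
   (\<forall>a b. a \<notin> {1..m} \<or> b \<notin> {1..m} \<longrightarrow> A a b = 0) \<Longrightarrow> (\<forall>a b. A a b = - A b a) \<Longrightarrow> (0, v, A) \<in> g2 m"
  unfolding g2_def T2_def by blast

lemma texp_inj_g2: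
  assumes "z \<in> g2 m" "z' \<in> g2 m" "texp z = texp z'" shows "z = z'"
proof -
  obtain v A where z: "z = (0, v, A)" using g2_D[OF assms(1)] by blast
  obtain v' A' where z': "z' = (0, v', A')" using g2_D[OF assms(2)] by blast
  have "v = v'" using assms(3) unfolding z z' texp_simp by simp
  moreover have "A = A'"
  proof (intro ext)
    fix a b
    have "snd (snd (texp z)) a b = snd (snd (texp z')) a b" using assms(3) by simp
    then have "A a b + v a * v b / 2 = A' a b + v' a * v' b / 2"
      unfolding z z' texp_simp by simp
    then show "A a b = A' a b" using \<open>v = v'\<close> by simp
  qed
  ultimately show ?thesis using z z' by simp
qed

lemma tlog_texp: "z \<in> g2 m \<Longrightarrow> tlog m (texp z) = z"
  unfolding tlog_def
proof (rule the_equality)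
  assume "z \<in> g2 m" then show "z \<in> g2 m \<and> texp z = texp z" by simp
next
  fix z' assume "z \<in> g2 m" "z' \<in> g2 m \<and> texp z' = texp z"
  then show "z' = z" using texp_inj_g2 by blast
qed

lemma tinv_simp: "tinv (1, v, A) = (1, \<lambda>a. - v a, \<lambda>a b. - A a b + v a * v b)"
  unfolding tinv_def
proof (rule the_equality)
  show "tmult (1, v, A) (1, \<lambda>a. - v a, \<lambda>a b. - A a b + v a * v b) = tone \<and>
    tmult (1, \<lambda>a. - v a, \<lambda>a b. - A a b + v a * v b) (1, v, A) = tone"
    unfolding tmult_def tone_def by auto
  fix y assume "tmult (1, v, A) y = tone \<and> tmult y (1, v, A) = tone"
  then have h: "tmult (1, v, A) y = tone" by blast
  obtain y0 y1 y2 where y: "y = (y0, y1, y2)" by (cases y) auto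
  have h0: "y0 = 1" and h1: "\<And>a. y1 a + v a * y0 = 0" and h2: "\<And>a b. y2 a b + v a * y1 b + A a b * y0 = 0"
    using h unfolding y tmult_def tone_def by (auto simp: fun_eq_iff)
  have y1: "y1 = (\<lambda>a. - v a)"
  proof (intro ext)
    fix a show "y1 a = - v a" using h1[of a] h0 by simp
  qed
  moreover have "y2 = (\<lambda>a b. - A a b + v a * v b)"
  proof (intro ext)
    fix a b have "y2 a b + v a * (- v b) + A a b = 0" using h2[of a b] h0 y1 by simp
    then show "y2 a b = - A a b + v a * v b" by simp
  qed
  ultimately show "y = (1, \<lambda>a. - v a, \<lambda>a b. - A a b + v a * v b)" using y h0 by simp
qed

lemma tmult_inv_exp:
  "tmult (tinv (texp (0, u, U))) (texp (0, z, Z)) =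
   texp (0, \<lambda>a. z a - u a, \<lambda>a b. Z a b - U a b + (z a * u b - u a * z b) / 2)"
  unfolding texp_simp tinv_simp tmult_def by (auto simp: fun_eq_iff field_simps)

lemma tsum_map: "tsum (map f xs) = (sum_list (map (\<lambda>x. fst (f x)) xs),
   \<lambda>a. sum_list (map (\<lambda>x. fst (snd (f x)) a) xs), \<lambda>a b. sum_list (map (\<lambda>x. snd (snd (f x)) a b) xs))"
  unfolding tsum_def by (induction xs) (auto simp: tzero_def tadd_def split: prod.splits)

definition mean1 :: "tens2 list \<Rightarrow> nat \<Rightarrow> real" where
  "mean1 zs a = sum_list (map (\<lambda>z. fst (snd z) a) zs) / length zs"
definition mean2 :: "tens2 list \<Rightarrow> nat \<Rightarrow> nat \<Rightarrow> real" where
  "mean2 zs a b = sum_list (map (\<lambda>z. snd (snd z) a b) zs) / length zs"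

lemma sum_list_zero_fun: "(\<And>x. x \<in> set xs \<Longrightarrow> f x = (0::real)) \<Longrightarrow> sum_list (map f xs) = 0"
  by (induction xs) auto

lemma bary_texp:
  assumes zs: "set zs \<subseteq> g2 m" and ne: "zs \<noteq> []"
  shows "bary m (map texp zs) = texp (0, mean1 zs, mean2 zs)"
proof -
  define N where "N = real (length zs)"
  have N0: "N > 0" using ne N_def by auto
  have zform: "\<And>z. z \<in> set zs \<Longrightarrow> z = (0, fst (snd z), snd (snd z))"
  proof -
    fix z assume "z \<in> set zs"
    then have "z \<in> g2 m" using zs by blast
    then obtain v A where "z = (0, v, A)" using g2_D by blast
    then show "z = (0, fst (snd z), snd (snd z))" by simp
  qed
  have wg2: "(0, \<lambda>a. fst (snd z) a - u a, \<lambda>a b. snd (snd z) a b - U a b + (fst (snd z) a * u b - u a * fst (snd z) b) / 2) \<in> g2 m"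
    if zin0: "z \<in> set zs" and ug: "(0, u, U) \<in> g2 m" for z u U
  proof -
    have zin: "z \<in> g2 m" using zin0 zs by blast
    obtain v A where z: "z = (0, v, A)" "\<forall>j. j \<notin> {1..m} \<longrightarrow> v j = 0"
      "\<forall>a b. a \<notin> {1..m} \<or> b \<notin> {1..m} \<longrightarrow> A a b = 0" "\<forall>a b. A a b = - A b a"
      using g2_D[OF zin] by blast
    obtain u' U' where u: "(0,u,U) = (0, u', U')" "\<forall>j. j \<notin> {1..m} \<longrightarrow> u' j = 0"
      "\<forall>a b. a \<notin> {1..m} \<or> b \<notin> {1..m} \<longrightarrow> U' a b = 0" "\<forall>a b. U' a b = - U' b a"
      using g2_D[OF ug] by blast
    have uu: "u = u'" "U = U'" using u(1) by auto
    show ?thesis unfolding z(1) uu fst_conv snd_conv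
    proof (intro g2_I allI impI)
      fix j :: nat assume "j \<notin> {1..m}" then show "v j - u' j = 0" using z(2) u(2) by simp
    next
      fix a b :: nat assume "a \<notin> {1..m} \<or> b \<notin> {1..m}"
      then show "A a b - U' a b + (v a * u' b - u' a * v b) / 2 = 0" using z(2,3) u(2,3) by auto
    next
      fix a b :: nat 
      have "A a b = - A b a" "U' a b = - U' b a" using z(4) u(4) by blast+
      then show "A a b - U' a b + (v a * u' b - u' a * v b) / 2 = - (A b a - U' b a + (v b * u' a - u' b * v a) / 2)"
        by (simp add: field_simps)
    qed
  qed
  define n where "n = length zs"
  define S1 where "S1 a = (\<Sum>i<n. fst (snd (zs ! i)) a)" for a
  define S2 where "S2 a b = (\<Sum>i<n. snd (snd (zs ! i)) a b)" for a b
  have Nn: "N = real n" using N_def n_def by simp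
  have sl: "sum_list (map f zs) = (\<Sum>i<n. f (zs ! i))" for f :: "tens2 \<Rightarrow> real"
    unfolding n_def by (simp add: sum_list_sum_nth atLeast0LessThan)
  have m1: "mean1 zs = (\<lambda>a. S1 a / N)" unfolding mean1_def S1_def Nn sl n_def by simp
  have m2: "mean2 zs = (\<lambda>a b. S2 a b / N)" unfolding mean2_def S2_def Nn sl n_def by simp
  have key: "tsum (map (\<lambda>x. tlog m (tmult (tinv (texp (0,u,U))) x)) (map texp zs)) =
     (0, \<lambda>a. S1 a - N * u a, \<lambda>a b. S2 a b - N * U a b + (S1 a * u b - u a * S1 b) / 2)"
    if ug: "(0,u,U) \<in> g2 m" for u U
  proof -
    have e: "tlog m (tmult (tinv (texp (0,u,U))) (texp z)) =
       (0, \<lambda>a. fst (snd z) a - u a, \<lambda>a b. snd (snd z) a b - U a b + (fst (snd z) a * u b - u a * fst (snd z) b) / 2)"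
      if zin: "z \<in> set zs" for z
    proof -
      have "tlog m (tmult (tinv (texp (0,u,U))) (texp (0, fst (snd z), snd (snd z)))) =
       (0, \<lambda>a. fst (snd z) a - u a, \<lambda>a b. snd (snd z) a b - U a b + (fst (snd z) a * u b - u a * fst (snd z) b) / 2)"
        unfolding tmult_inv_exp by (rule tlog_texp[OF wg2[OF zin ug]])
      then show ?thesis by (simp only: zform[OF zin, symmetric])
    qed
    have "tsum (map (\<lambda>x. tlog m (tmult (tinv (texp (0,u,U))) x)) (map texp zs)) =
      tsum (map (\<lambda>z. (0, \<lambda>a. fst (snd z) a - u a, \<lambda>a b. snd (snd z) a b - U a b + (fst (snd z) a * u b - u a * fst (snd z) b) / 2)) zs)"
      unfolding map_map o_def by (rule arg_cong[where f=tsum], rule map_cong, simp_all add: e)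
    also have "\<dots> = (0, \<lambda>a. S1 a - N * u a, \<lambda>a b. S2 a b - N * U a b + (S1 a * u b - u a * S1 b) / 2)"
    proof -
      have c1: "(\<Sum>i<n. fst (snd (zs ! i)) a - u a) = S1 a - N * u a" for a
        unfolding S1_def Nn by (simp add: sum_subtractf)
      have c2: "(\<Sum>i<n. snd (snd (zs ! i)) a b - U a b + (fst (snd (zs ! i)) a * u b - u a * fst (snd (zs ! i)) b) / 2)
         = S2 a b - N * U a b + (S1 a * u b - u a * S1 b) / 2" for a b
      proof -
        have "(\<Sum>i<n. snd (snd (zs ! i)) a b - U a b + (fst (snd (zs ! i)) a * u b - u a * fst (snd (zs ! i)) b) / 2)
          = (\<Sum>i<n. snd (snd (zs ! i)) a b) - (\<Sum>i<n. U a b) + (\<Sum>i<n. fst (snd (zs ! i)) a * u b - u a * fst (snd (zs ! i)) b) / 2"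
          by (simp only: sum.distrib sum_subtractf sum_divide_distrib[symmetric])
        also have "(\<Sum>i<n. fst (snd (zs ! i)) a * u b - u a * fst (snd (zs ! i)) b) = S1 a * u b - u a * S1 b"
          unfolding S1_def by (simp only: sum_subtractf sum_distrib_left sum_distrib_right)
        finally show ?thesis unfolding S2_def Nn by simp
      qed
      show ?thesis unfolding tsum_map sl using c1 c2 by simp
    qed
    finally show ?thesis .
  qed
  have sol: "tsum (map (\<lambda>x. tlog m (tmult (tinv (texp (0,u,U))) x)) (map texp zs)) = tzero
     \<longleftrightarrow> u = mean1 zs \<and> U = mean2 zs"
    if ug: "(0,u,U) \<in> g2 m" for u U
  proof
    assume h: "tsum (map (\<lambda>x. tlog m (tmult (tinv (texp (0,u,U))) x)) (map texp zs)) = tzero"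
    have h1: "S1 a - N * u a = 0" for a
      using arg_cong[OF h, of "\<lambda>x. fst (snd x) a"] unfolding key[OF ug] tzero_def by simp
    have h2: "S2 a b - N * U a b + (S1 a * u b - u a * S1 b) / 2 = 0" for a b
      using arg_cong[OF h, of "\<lambda>x. snd (snd x) a b"] unfolding key[OF ug] tzero_def by simp
    have u: "u a = S1 a / N" for a using h1[of a] N0 by (simp add: field_simps)
    have "U a b = S2 a b / N" for a b
    proof -
      have "S1 a * u b - u a * S1 b = 0" unfolding u by (simp add: field_simps)
      then show ?thesis using h2[of a b] N0 by (simp add: field_simps)
    qed
    then show "u = mean1 zs \<and> U = mean2 zs" unfolding m1 m2 using u by (simp add: fun_eq_iff)
  next
    assume "u = mean1 zs \<and> U = mean2 zs"
    then have u: "u = (\<lambda>a. S1 a / N)" and U: "U = (\<lambda>a b. S2 a b / N)" unfolding m1 m2 by auto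
    show "tsum (map (\<lambda>x. tlog m (tmult (tinv (texp (0,u,U))) x)) (map texp zs)) = tzero"
      unfolding key[OF ug] tzero_def using N0 by (simp add: u U fun_eq_iff field_simps)
  qed
  have zi: "zs ! i \<in> g2 m" if "i < n" for i using zs that n_def by auto
  have zi1: "fst (snd (zs ! i)) j = 0" if ii: "i < n" and jj: "j \<notin> {1..m}" for i j
  proof -
    obtain v A where "zs ! i = (0,v,A)" "\<forall>j. j \<notin> {1..m} \<longrightarrow> v j = 0"
      using g2_D[OF zi[OF ii]] by blast
    then show ?thesis using jj by simp
  qed
  have zi2: "snd (snd (zs ! i)) a b = 0" if ii: "i < n" and jj: "a \<notin> {1..m} \<or> b \<notin> {1..m}" for i a b
  proof -
    obtain v A where "zs ! i = (0,v,A)" "\<forall>a b. a \<notin> {1..m} \<or> b \<notin> {1..m} \<longrightarrow> A a b = 0"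
      using g2_D[OF zi[OF ii]] by blast
    then show ?thesis using jj by simp
  qed
  have zi3: "snd (snd (zs ! i)) a b = - snd (snd (zs ! i)) b a" if ii: "i < n" for i a b
  proof -
    obtain v A where "zs ! i = (0,v,A)" "\<forall>a b. A a b = - A b a"
      using g2_D[OF zi[OF ii]] by blast
    then show ?thesis by (metis snd_conv)
  qed
  have mg2: "(0, mean1 zs, mean2 zs) \<in> g2 m"
  proof (intro g2_I allI impI)
    fix j :: nat assume "j \<notin> {1..m}"
    then show "mean1 zs j = 0" unfolding m1 S1_def using zi1 by simp
  next
    fix a b :: nat assume "a \<notin> {1..m} \<or> b \<notin> {1..m}"
    then show "mean2 zs a b = 0" unfolding m2 S2_def using zi2 by simp
  next
    fix a b :: nat
    have "(\<Sum>i<n. snd (snd (zs ! i)) a b) = (\<Sum>i<n. - snd (snd (zs ! i)) b a)"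
      by (rule sum.cong) (auto intro: zi3)
    then show "mean2 zs a b = - mean2 zs b a" unfolding m2 S2_def
      by (simp add: sum_negf)
  qed
  show ?thesis unfolding bary_def
  proof (rule the_equality)
    show "texp (0, mean1 zs, mean2 zs) \<in> G2 m \<and>
      tsum (map (\<lambda>x. tlog m (tmult (tinv (texp (0, mean1 zs, mean2 zs))) x)) (map texp zs)) = tzero"
      using sol[OF mg2] mg2 unfolding G2_def by blast
  next
    fix mm assume h: "mm \<in> G2 m \<and> tsum (map (\<lambda>x. tlog m (tmult (tinv mm) x)) (map texp zs)) = tzero"
    then obtain w where w: "w \<in> g2 m" "mm = texp w" unfolding G2_def by blast
    then obtain u U where uU: "w = (0, u, U)" using g2_D by blast
    show "mm = texp (0, mean1 zs, mean2 zs)" using sol[of u U] h w uU by auto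
  qed
qed

lemma box_pair_real: "box (a::real, c::real) (b, d) = {x. a < fst x \<and> fst x < b \<and> c < snd x \<and> snd x < d}"
  by (auto simp: mem_box Basis_prod_def)

lemma rect_integral:
  assumes "a \<le> b" "c \<le> d"
  shows "((\<lambda>_. 1::real) has_integral (b - a) * (d - c)) {x::real\<times>real. a < fst x \<and> fst x < b \<and> c < snd x \<and> snd x < d}"
proof -
  have "((\<lambda>_. 1::real) has_integral Henstock_Kurzweil_Integration.content (cbox (a, c) (b, d)) *\<^sub>R 1) (cbox (a, c) (b, d))"
    by (rule has_integral_const)
  moreover have "Henstock_Kurzweil_Integration.content (cbox (a, c) (b, d)) = (b - a) * (d - c)"
    using assms by (simp add: content_Pair)
  ultimately show ?thesis
    unfolding box_pair_real[symmetric] has_integral_open_interval by simp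
qed

lemma negligible_fst_eq: "negligible {x::real\<times>real. fst x = c}"
proof -
  have "{x::real\<times>real. fst x = c} = {x. inner (1::real, 0::real) x = c}" by (auto simp: inner_prod_def)
  then show ?thesis using negligible_hyperplane[of "(1::real, 0::real)" c] by (simp add: zero_prod_def)
qed

lemma negligible_snd_eq: "negligible {x::real\<times>real. snd x = c}"
proof -
  have "{x::real\<times>real. snd x = c} = {x. inner (0::real, 1::real) x = c}" by (auto simp: inner_prod_def)
  then show ?thesis using negligible_hyperplane[of "(0::real, 1::real)" c] by (simp add: zero_prod_def)
qed

lemma negligible_diag: "negligible {x::real\<times>real. fst x = snd x}"
proof -
  have "{x::real\<times>real. fst x = snd x} = {x. inner (1::real, -1::real) x = 0}" by (auto simp: inner_prod_def)
  then show ?thesis using negligible_hyperplane[of "(1::real, -1::real)" 0] by (simp add: zero_prod_def)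
qed

lemma triangle_integral:
  assumes lh: "l \<le> h"
  shows "((\<lambda>_. 1::real) has_integral (h - l)^2 / 2) {x::real\<times>real. l < fst x \<and> fst x < snd x \<and> snd x < h}"
proof -
  define Tr where "Tr = {x::real\<times>real. l < fst x \<and> fst x < snd x \<and> snd x < h}"
  define C where "C = cbox (l, l) (h, h)"
  have TrC: "Tr \<subseteq> C" unfolding Tr_def C_def by (auto simp: cbox_Pair_eq)
  have "Tr = {x. l < fst x} \<inter> {x. fst x < snd x} \<inter> {x. snd x < h}" unfolding Tr_def by auto
  moreover have "open ({x::real\<times>real. l < fst x} \<inter> {x. fst x < snd x} \<inter> {x. snd x < h})"
    by (intro open_Int open_Collect_less continuous_intros)
  ultimately have "open Tr" by simp
  moreover have "bounded Tr" using TrC unfolding C_def by (meson bounded_cbox bounded_subset)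
  ultimately have "Tr \<in> lmeasurable" by (rule lmeasurable_open[rotated])
  then obtain I where I: "((\<lambda>_. 1::real) has_integral I) Tr"
    using lmeasurable_iff_integrable_on by (auto simp: integrable_on_def)
  define f where "f x = (if x \<in> Tr then 1::real else 0)" for x
  have fC: "(f has_integral I) C" unfolding f_def using I TrC by simp
  have fsw: "((\<lambda>x. f (prod.swap x)) has_integral I) C"
  proof -
    have "((\<lambda>x. f (prod.swap x)) has_integral (1 / 1) *\<^sub>R I) (prod.swap ` cbox (l, l) (h, h))"
    proof (rule has_integral_twiddle[where g = prod.swap and h = prod.swap])
      show "Henstock_Kurzweil_Integration.content (prod.swap ` cbox u v) = 1 * Henstock_Kurzweil_Integration.content (cbox u v)" for u v :: "real \<times> real"
      proof -
        obtain a b where u: "u = (a, b)" by (cases u)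
        obtain c d where v: "v = (c, d)" by (cases v)
        have "prod.swap ` cbox (a, b) (c, d) = cbox (b, a) (d, c)" by (rule swap_cbox_Pair)
        then show ?thesis unfolding u v by (simp add: content_Pair)
      qed
      show "(f has_integral I) (cbox (l, l) (h, h))" using fC C_def by simp
      show "\<And>x. prod.swap (prod.swap x) = x" by simp
      show "\<And>x. prod.swap (prod.swap x) = x" by simp
      show "\<And>x. continuous (at x) prod.swap" by (rule isCont_swap)
      show "\<exists>w z. prod.swap ` cbox u v = cbox w z" for u v :: "real \<times> real"
        by (cases u, cases v) (metis swap_cbox_Pair)
      show "\<exists>w z. prod.swap ` cbox u v = cbox w z" for u v :: "real \<times> real"
        by (cases u, cases v) (metis swap_cbox_Pair)
    qed simp
    then show ?thesis unfolding C_def by simp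
  qed
  have sum: "((\<lambda>x. f x + f (prod.swap x)) has_integral (I + I)) C"
    using fC fsw by (rule has_integral_add)
  define N where "N = {x::real\<times>real. fst x = snd x} \<union> {x. fst x = l} \<union> {x. fst x = h} \<union> {x. snd x = l} \<union> {x. snd x = h}"
  have N: "negligible N" unfolding N_def
    using negligible_diag negligible_fst_eq negligible_snd_eq by auto
  have "((\<lambda>x. f x + f (prod.swap x)) has_integral Henstock_Kurzweil_Integration.content C *\<^sub>R 1) C"
  proof (rule has_integral_spike[OF N])
    show "((\<lambda>x. 1::real) has_integral Henstock_Kurzweil_Integration.content C *\<^sub>R 1) C" unfolding C_def by (rule has_integral_const)
    fix x assume "x \<in> C - N"
    obtain s t where x: "x = (s, t)" by (cases x)
    have "l \<le> s" "s \<le> h" "l \<le> t" "t \<le> h" "s \<noteq> t" "s \<noteq> l" "s \<noteq> h" "t \<noteq> l" "t \<noteq> h"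
      using \<open>x \<in> C - N\<close> unfolding x C_def N_def by auto
    then show "f x + f (prod.swap x) = 1"
      unfolding f_def Tr_def x by auto
  qed
  then have "I + I = Henstock_Kurzweil_Integration.content C *\<^sub>R 1" by (rule has_integral_unique[OF sum])
  then have "I + I = Henstock_Kurzweil_Integration.content C" by simp
  moreover have "Henstock_Kurzweil_Integration.content C = (h - l)^2" unfolding C_def using lh by (simp add: content_Pair power2_eq_square)
  ultimately have I2: "I = (h - l)^2 / 2" by simp
  show ?thesis using I unfolding Tr_def I2 .
qed

definition lo :: "nat \<Rightarrow> real" where "lo p = 1 - 1 / 2^p"
definition hi :: "nat \<Rightarrow> nat \<Rightarrow> real" where "hi k p = (if Suc p = k then 1 else 1 - 1 / 2^(Suc p))"
definition dd :: "nat list \<Rightarrow> nat \<Rightarrow> real \<Rightarrow> real" where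
  "dd js a t = (\<Sum>p<length js. if js ! p = a \<and> lo p < t \<and> t < hi (length js) p then 1 / (hi (length js) p - lo p) else 0)"

lemma lo_0[simp]: "lo 0 = 0" by (simp add: lo_def)
lemma lo_Suc: "lo (Suc p) = (1 + lo p) / 2" by (simp add: lo_def field_simps)
lemma hi_Suc: "hi (Suc k) (Suc p) = (1 + hi k p) / 2" by (simp add: hi_def field_simps)
lemma lo_ge_half: "lo (Suc p) \<ge> 1/2"
proof -
  have "(1::real) / 2^(Suc p) \<le> 1/2" by (simp add: field_simps)
  then show ?thesis unfolding lo_def by linarith
qed
lemma lo_1: "lo (Suc 0) = 1/2" by (simp add: lo_def)

lemma axis_concat_0: "axis_concat js 0 = (\<lambda>k. 0)"
  by (induction js rule: axis_concat.induct) (auto simp: Epath_def pconcat_def)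

lemma axis_concat_1: "axis_concat js 1 a = (\<Sum>p<length js. if js ! p = a then 1 else 0)"
proof (induction js rule: axis_concat.induct)
  case 1 then show ?case by simp
next
  case (2 j) then show ?case by (simp add: Epath_def)
next
  case (3 j v va)
  have "axis_concat (j # v # va) 1 a = Epath j 1 a + axis_concat (v # va) 1 a"
    by (simp add: pconcat_def)
  also have "\<dots> = (\<Sum>p<length (j # v # va). if (j # v # va) ! p = a then 1 else 0)"
    unfolding 3 by (simp only: length_Cons sum.lessThan_Suc_shift) (simp add: Epath_def)
  finally show ?case .
qed

lemma axis_deriv:
  assumes "js \<noteq> []" "0 < t" "t < 1" "\<forall>p<length js. t \<noteq> lo p"
  shows "((\<lambda>s. axis_concat js s a) has_real_derivative dd js a t) (at t)"
  using assms
proof (induction js arbitrary: t rule: axis_concat.induct)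
  case 1 then show ?case by simp
next
  case (2 j)
  have dd: "dd [j] a t = (if j = a then 1 else 0)" using 2 by (simp add: dd_def hi_def)
  show ?case
  proof (cases "j = a")
    case True
    then have "(\<lambda>s. axis_concat [j] s a) = (\<lambda>s. s)" by (auto simp: Epath_def)
    then show ?thesis using dd True by (simp add: DERIV_ident)
  next
    case False
    then have "(\<lambda>s. axis_concat [j] s a) = (\<lambda>s. 0)" by (auto simp: Epath_def)
    then show ?thesis using dd False by simp
  qed
next
  case (3 j v va)
  let ?Y = "axis_concat (v # va)"
  define k where "k = length va"
  have len: "length (j # v # va) = Suc (Suc k)" "length (v # va) = Suc k" by (simp_all add: k_def)
  have fX: "(\<lambda>s. axis_concat (j # v # va) s a) = (\<lambda>s. if s < 1/2 then Epath j (2 * s) a else Epath j 1 a + ?Y (2 * s - 1) a)"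
    by (auto simp: pconcat_def fun_eq_iff)
  have tne: "t \<noteq> 1/2" using "3.prems"(4) lo_1 len by auto
  show ?case
  proof (cases "t < 1/2")
    case True
    have d1: "((\<lambda>s. Epath j (2 * s) a) has_real_derivative (if j = a then 2 else 0)) (at t)"
    proof (cases "j = a")
      case True
      then have "(\<lambda>s. Epath j (2 * s) a) = (\<lambda>s. 2 * s)" by (auto simp: Epath_def)
      then show ?thesis using True by (auto intro!: derivative_eq_intros)
    next
      case False
      then have "(\<lambda>s. Epath j (2 * s) a) = (\<lambda>s. 0)" by (auto simp: Epath_def)
      then show ?thesis using False by simp
    qed
    have "dd (j # v # va) a t = (if j = a then 2 else 0)"
    proof -
      have z: "(\<Sum>p<Suc k. if (j # v # va) ! Suc p = a \<and> lo (Suc p) < t \<and> t < hi (Suc (Suc k)) (Suc p)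
               then 1 / (hi (Suc (Suc k)) (Suc p) - lo (Suc p)) else 0) = 0"
      proof (rule sum.neutral, intro ballI)
        fix p have "\<not> lo (Suc p) < t" using lo_ge_half[of p] True by linarith
        then show "(if (j # v # va) ! Suc p = a \<and> lo (Suc p) < t \<and> t < hi (Suc (Suc k)) (Suc p)
               then 1 / (hi (Suc (Suc k)) (Suc p) - lo (Suc p)) else 0) = 0" by simp
      qed
      have h0: "hi (Suc (Suc k)) 0 = 1/2" by (simp add: hi_def)
      show ?thesis unfolding dd_def len
        by (subst sum.lessThan_Suc_shift) (simp only: z h0, use True "3.prems"(2) in simp)
    qed
    moreover have "((\<lambda>s. axis_concat (j # v # va) s a) has_real_derivative (if j = a then 2 else 0)) (at t)"
      using has_field_derivative_transform_within_open[OF d1, of "{..<1/2}"] True unfolding fX by auto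
    ultimately show ?thesis by simp
  next
    case False
    then have tg: "t > 1/2" using tne by simp
    have ih: "((\<lambda>s. ?Y s a) has_real_derivative dd (v # va) a (2 * t - 1)) (at (2 * t - 1))"
    proof (rule "3.IH")
      show "0 < 2 * t - 1" "2 * t - 1 < 1" using tg "3.prems" by auto
      show "\<forall>p<length (v # va). 2 * t - 1 \<noteq> lo p"
      proof (intro allI impI)
        fix p assume "p < length (v # va)"
        then have "t \<noteq> lo (Suc p)" using "3.prems"(4) by auto
        then show "2 * t - 1 \<noteq> lo p" unfolding lo_Suc by auto
      qed
    qed simp
    have d2: "((\<lambda>s. Epath j 1 a + ?Y (2 * s - 1) a) has_real_derivative dd (v # va) a (2 * t - 1) * 2) (at t)"
    proof -
      have "((\<lambda>s. 2 * s - 1) has_real_derivative 2) (at t)" by (auto intro!: derivative_eq_intros)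
      from DERIV_chain2[OF ih this] have "((\<lambda>s. ?Y (2 * s - 1) a) has_real_derivative dd (v # va) a (2 * t - 1) * 2) (at t)" .
      then show ?thesis by (auto intro!: derivative_eq_intros)
    qed
    have "dd (j # v # va) a t = dd (v # va) a (2 * t - 1) * 2"
    proof -
      have e: "(if (j # v # va) ! Suc p = a \<and> lo (Suc p) < t \<and> t < hi (Suc (Suc k)) (Suc p)
               then 1 / (hi (Suc (Suc k)) (Suc p) - lo (Suc p)) else 0) =
            (if (v # va) ! p = a \<and> lo p < 2 * t - 1 \<and> 2 * t - 1 < hi (Suc k) p
               then 1 / (hi (Suc k) p - lo p) else 0) * 2" for p
        unfolding lo_Suc hi_Suc by (auto simp: field_simps)
      have h0: "hi (Suc (Suc k)) 0 = 1/2" by (simp add: hi_def)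
      show ?thesis unfolding dd_def len
        by (subst sum.lessThan_Suc_shift) (simp only: e h0 sum_distrib_right[symmetric], use tg in simp)
    qed
    moreover have "((\<lambda>s. axis_concat (j # v # va) s a) has_real_derivative dd (v # va) a (2 * t - 1) * 2) (at t)"
      using has_field_derivative_transform_within_open[OF d2, of "{1/2<..}"] tg unfolding fX by auto
    ultimately show ?thesis by simp
  qed
qed

lemma lo_mono: "p < q \<Longrightarrow> lo p < lo q"
  unfolding lo_def by (simp add: field_simps) 

lemma lo_nonneg: "0 \<le> lo p" unfolding lo_def by (simp add: field_simps)

lemma lo_lt_hi: "p < k \<Longrightarrow> lo p < hi k p"
  unfolding hi_def using lo_mono[of p "Suc p"] by (auto simp: lo_def)

lemma hi_le_1: "hi k p \<le> 1" unfolding hi_def by auto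

lemma hi_le_lo: "p < q \<Longrightarrow> q < k \<Longrightarrow> hi k p \<le> lo q"
proof -
  assume pq: "p < q" "q < k"
  then have "hi k p = lo (Suc p)" unfolding hi_def lo_def by auto
  moreover have "lo (Suc p) \<le> lo q" using lo_mono[of "Suc p" q] pq by (cases "Suc p = q") auto
  ultimately show ?thesis by simp
qed

definition val :: "nat \<Rightarrow> nat \<Rightarrow> real" where
  "val p q = (if p < q then 1 else if p = q then 1/2 else 0)"

definition Tri :: "(real \<times> real) set" where "Tri = {x. 0 < fst x \<and> fst x < snd x \<and> snd x < 1}"

lemma piece_integral:
  assumes pk: "p < k" and qk: "q < k"
  shows "((\<lambda>x. if lo p < fst x \<and> fst x < hi k p \<and> lo q < snd x \<and> snd x < hi k q
              then 1 / (hi k p - lo p) * (1 / (hi k q - lo q)) else 0) has_integral val p q) Tri"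
proof -
  define R where "R = {x::real\<times>real. lo p < fst x \<and> fst x < hi k p \<and> lo q < snd x \<and> snd x < hi k q}"
  define C where "C = 1 / (hi k p - lo p) * (1 / (hi k q - lo q))"
  have lp: "lo p < hi k p" "lo q < hi k q" using lo_lt_hi pk qk by auto
  have "((\<lambda>_. C) has_integral val p q) (R \<inter> Tri)"
  proof (cases "p < q")
    case True
    have "R \<inter> Tri = R" unfolding R_def Tri_def using hi_le_lo[OF True qk] lo_nonneg[of p] hi_le_1[of k q] by auto
    moreover have "((\<lambda>_. 1::real) has_integral (hi k p - lo p) * (hi k q - lo q)) R"
      unfolding R_def using lp by (intro rect_integral) auto
    then have "((\<lambda>_. C * 1) has_integral C * ((hi k p - lo p) * (hi k q - lo q))) R"
      by (rule has_integral_mult_right)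
    moreover have "C * ((hi k p - lo p) * (hi k q - lo q)) = val p q" unfolding C_def val_def using True lp by auto
    ultimately show ?thesis by simp
  next
    case False
    show ?thesis
    proof (cases "p = q")
      case True
      have "R \<inter> Tri = {x. lo p < fst x \<and> fst x < snd x \<and> snd x < hi k p}"
        unfolding R_def Tri_def True using lo_nonneg[of q] hi_le_1[of k q] by auto
      moreover have "((\<lambda>_. 1::real) has_integral (hi k p - lo p)^2 / 2) {x. lo p < fst x \<and> fst x < snd x \<and> snd x < hi k p}"
        using lp by (intro triangle_integral) auto
      then have "((\<lambda>_. C * 1) has_integral C * ((hi k p - lo p)^2 / 2)) {x. lo p < fst x \<and> fst x < snd x \<and> snd x < hi k p}"
        by (rule has_integral_mult_right)
      moreover have "C * ((hi k p - lo p)^2 / 2) = val p q" unfolding C_def val_def using True lp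
        by (simp add: power2_eq_square)
      ultimately show ?thesis by simp
    next
      case False
      then have qp: "q < p" using \<open>\<not> p < q\<close> by simp
      have "R \<inter> Tri = {}" unfolding R_def Tri_def using hi_le_lo[OF qp pk] by auto
      moreover have "val p q = 0" unfolding val_def using qp by simp
      ultimately show ?thesis by simp
    qed
  qed
  then have "((\<lambda>x. if x \<in> R then C else 0) has_integral val p q) Tri"
    using has_integral_restrict_Int[of R "\<lambda>_. C" "val p q" Tri] by simp
  then show ?thesis unfolding R_def C_def by simp
qed

lemma negligible_lines:
  "negligible (\<Union>p<k. {x::real\<times>real. fst x = lo p} \<union> {x. snd x = lo p})"
  by (rule negligible_Union) (auto simp: negligible_fst_eq negligible_snd_eq)

lemma sig_integral:
  assumes ne: "js \<noteq> []"
  shows "integral Tri (\<lambda>x. deriv (\<lambda>t. axis_concat js t a) (fst x) * deriv (\<lambda>t. axis_concat js t b) (snd x))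
       = (\<Sum>p<length js. \<Sum>q<length js. if js ! p = a \<and> js ! q = b then val p q else 0)"
proof -
  define k where "k = length js"
  define N where "N = (\<Union>p<k. {x::real\<times>real. fst x = lo p} \<union> {x. snd x = lo p})"
  define G where "G p q x = (if js ! p = a \<and> js ! q = b then
      (if lo p < fst x \<and> fst x < hi k p \<and> lo q < snd x \<and> snd x < hi k q
              then 1 / (hi k p - lo p) * (1 / (hi k q - lo q)) else 0) else 0)" for p q and x :: "real \<times> real"
  have "integral Tri (\<lambda>x. deriv (\<lambda>t. axis_concat js t a) (fst x) * deriv (\<lambda>t. axis_concat js t b) (snd x))
      = integral Tri (\<lambda>x. \<Sum>p<k. \<Sum>q<k. G p q x)"
  proof (rule integral_spike[of N])
    show "negligible N" unfolding N_def by (rule negligible_lines)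
    fix x assume x: "x \<in> Tri - N"
    have d: "deriv (\<lambda>t. axis_concat js t c) s = dd js c s" if "0 < s" "s < 1" "\<forall>p<k. s \<noteq> lo p" for c s
      by (rule DERIV_imp_deriv, rule axis_deriv) (use ne that k_def in auto)
    have "deriv (\<lambda>t. axis_concat js t a) (fst x) = dd js a (fst x)"
      using x unfolding Tri_def N_def by (intro d) auto
    moreover have "deriv (\<lambda>t. axis_concat js t b) (snd x) = dd js b (snd x)"
      using x unfolding Tri_def N_def by (intro d) auto
    moreover have "dd js a (fst x) * dd js b (snd x) = (\<Sum>p<k. \<Sum>q<k. G p q x)"
      unfolding dd_def k_def[symmetric] sum_product G_def by (intro sum.cong refl) auto
    ultimately show "(\<Sum>p<k. \<Sum>q<k. G p q x) = deriv (\<lambda>t. axis_concat js t a) (fst x) * deriv (\<lambda>t. axis_concat js t b) (snd x)"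
      by simp
  qed
  also have "\<dots> = (\<Sum>p<k. \<Sum>q<k. if js ! p = a \<and> js ! q = b then val p q else 0)"
  proof (rule integral_unique, intro has_integral_sum finite_lessThan)
    fix p q assume "p \<in> {..<k}" "q \<in> {..<k}"
    then show "(G p q has_integral (if js ! p = a \<and> js ! q = b then val p q else 0)) Tri"
      unfolding G_def using piece_integral[of p k q] by auto
  qed
  finally show ?thesis unfolding k_def .
qed

definition sg :: "nat \<Rightarrow> nat \<Rightarrow> real" where
  "sg a b = (if a < b then 1 else if a = b then 0 else -1)"

definition inb :: "nat \<Rightarrow> nat \<Rightarrow> nat \<Rightarrow> bool" where
  "inb s n a \<longleftrightarrow> s < a \<and> a \<le> s + n"

lemma sum_shift_delta:
  "(\<Sum>p<n. if s + 1 + p = a then f p else 0) = (if inb s n a then f (a - s - 1) else (0::real))"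
proof (cases "inb s n a")
  case True
  then have "(\<Sum>p<n. if s + 1 + p = a then f p else 0) = (\<Sum>p<n. if p = a - s - 1 then f p else 0)"
    unfolding inb_def by (intro sum.cong) auto
  also have "\<dots> = f (a - s - 1)" using True unfolding inb_def by (subst sum.delta) auto
  finally show ?thesis using True by simp
next
  case False
  then show ?thesis unfolding inb_def by (intro trans[OF sum.neutral]) auto
qed

lemma upt_nth_block: "p < n \<Longrightarrow> [s + 1 ..< s + n + 1] ! p = s + 1 + p" by (subst nth_upt) auto

lemma sig_block:
  assumes n: "0 < n"
  shows "sig2 (axis_concat [s + 1 ..< s + n + 1]) =
    texp (0, \<lambda>a. if inb s n a then 1 else 0, \<lambda>a b. if inb s n a \<and> inb s n b then sg a b / 2 else 0)"
proof -
  let ?js = "[s + 1 ..< s + n + 1]"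
  have ne: "?js \<noteq> []" using n by simp
  have len: "length ?js = n" by simp
  have l1: "axis_concat ?js 1 a - axis_concat ?js 0 a = (if inb s n a then 1 else 0)" for a
  proof -
    have "axis_concat ?js 1 a = (\<Sum>p<n. if s + 1 + p = a then 1 else 0)"
      unfolding axis_concat_1 len by (intro sum.cong) (auto simp del: upt_Suc simp add: upt_nth_block)
    then show ?thesis unfolding axis_concat_0 sum_shift_delta by simp
  qed
  have l2: "integral {p. 0 < fst p \<and> fst p < snd p \<and> snd p < 1}
      (\<lambda>p. deriv (\<lambda>t. axis_concat ?js t a) (fst p) * deriv (\<lambda>t. axis_concat ?js t b) (snd p))
      = (if inb s n a \<and> inb s n b then val (a - s - 1) (b - s - 1) else 0)" for a b
  proof -
    have "integral {p. 0 < fst p \<and> fst p < snd p \<and> snd p < 1}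
      (\<lambda>p. deriv (\<lambda>t. axis_concat ?js t a) (fst p) * deriv (\<lambda>t. axis_concat ?js t b) (snd p))
      = (\<Sum>p<n. \<Sum>q<n. if ?js ! p = a \<and> ?js ! q = b then val p q else 0)"
      using sig_integral[OF ne, of a b] unfolding Tri_def len .
    also have "\<dots> = (\<Sum>p<n. if s + 1 + p = a then (\<Sum>q<n. if s + 1 + q = b then val p q else 0) else 0)"
    proof (intro sum.cong refl)
      fix p assume p: "p \<in> {..<n}"
      have "(\<Sum>q<n. if ?js ! p = a \<and> ?js ! q = b then val p q else 0) =
            (\<Sum>q<n. if s + 1 + p = a then (if s + 1 + q = b then val p q else 0) else 0)"
      proof (intro sum.cong refl)
        fix q assume q: "q \<in> {..<n}"
        show "(if ?js ! p = a \<and> ?js ! q = b then val p q else 0) =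
            (if s + 1 + p = a then (if s + 1 + q = b then val p q else 0) else 0)"
          using p q by (simp only: upt_nth_block lessThan_iff) simp
      qed
      then show "(\<Sum>q<n. if ?js ! p = a \<and> ?js ! q = b then val p q else 0) =
            (if s + 1 + p = a then (\<Sum>q<n. if s + 1 + q = b then val p q else 0) else 0)"
        by (cases "s + 1 + p = a") simp_all
    qed
    also have "\<dots> = (if inb s n a \<and> inb s n b then val (a - s - 1) (b - s - 1) else 0)"
      unfolding sum_shift_delta by simp
    finally show ?thesis .
  qed
  have l2': "(if inb s n a \<and> inb s n b then val (a - s - 1) (b - s - 1) else 0) =
     (if inb s n a \<and> inb s n b then sg a b / 2 else 0) + (if inb s n a then 1 else 0) * (if inb s n b then 1 else 0) / 2" for a b
  proof (cases "inb s n a \<and> inb s n b")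
    case True
    then have "s < a" "s < b" unfolding inb_def by auto
    then have e1: "(a - s - 1 < b - s - 1) = (a < b)" "(a - s - 1 = b - s - 1) = (a = b)" by auto
    show ?thesis using True unfolding val_def sg_def e1 by simp
  next
    case False
    then show ?thesis by auto
  qed
  show ?thesis unfolding sig2_def texp_simp l1 l2 l2' by simp
qed

fun blk :: "nat list \<Rightarrow> nat \<Rightarrow> nat" where
  "blk [] i = 0"
| "blk (x # xs) i = (if i < x then 0 else Suc (blk xs (i - x)))"

lemma blk_iff:
  "i < sum_list \<alpha> \<Longrightarrow> t < length \<alpha> \<Longrightarrow>
   (sum_list (take t \<alpha>) \<le> i \<and> i < sum_list (take t \<alpha>) + \<alpha> ! t) \<longleftrightarrow> t = blk \<alpha> i"
proof (induction \<alpha> arbitrary: i t)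
  case Nil then show ?case by simp
next
  case (Cons x xs)
  show ?case
  proof (cases t)
    case 0 then show ?thesis by simp
  next
    case (Suc t')
    show ?thesis
    proof (cases "i < x")
      case True then show ?thesis using Suc by simp
    next
      case False
      then have "i - x < sum_list xs" "t' < length xs" using Cons.prems Suc by auto
      from Cons.IH[OF this] show ?thesis using Suc False by auto
    qed
  qed
qed

lemma blk_lt: "i < sum_list \<alpha> \<Longrightarrow> blk \<alpha> i < length \<alpha>"
  by (induction \<alpha> arbitrary: i) auto

lemma off_le: "t < length (\<alpha>::nat list) \<Longrightarrow> sum_list (take t \<alpha>) + \<alpha> ! t \<le> sum_list \<alpha>"
proof (induction \<alpha> arbitrary: t)
  case Nil then show ?case by simp
next
  case (Cons x xs)
  show ?case
  proof (cases t)
    case 0 then show ?thesis by simp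
  next
    case (Suc t')
    then have "t' < length xs" using Cons.prems by simp
    from Cons.IH[OF this] show ?thesis using Suc by simp
  qed
qed

lemma sum_list_upt1: "sum_list (map h [Suc 0..<Suc N]) = (\<Sum>t<N. h (Suc t) :: real)"
  by (induction N) auto

definition zb :: "nat list \<Rightarrow> nat \<Rightarrow> tens2" where
  "zb \<alpha> t = (0, \<lambda>a. if inb (sum_list (take t \<alpha>)) (\<alpha> ! t) a then 1 else 0,
     \<lambda>a b. if inb (sum_list (take t \<alpha>)) (\<alpha> ! t) a \<and> inb (sum_list (take t \<alpha>)) (\<alpha> ! t) b then sg a b / 2 else 0)"

lemma sig_Ax:
  assumes "\<alpha> \<in> compositions m" "1 \<le> i" "i \<le> length \<alpha>"
  shows "sig2 (Ax \<alpha> i) = texp (zb \<alpha> (i - 1))"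
proof -
  have "\<alpha> ! (i - 1) \<in> set \<alpha>" using assms by auto
  then have pos: "0 < \<alpha> ! (i - 1)" using assms(1) unfolding compositions_def by auto
  show ?thesis unfolding Ax_def Let_def zb_def using sig_block[OF pos] by simp
qed

lemma zb_g2:
  assumes "\<alpha> \<in> compositions m" "t < length \<alpha>"
  shows "zb \<alpha> t \<in> g2 m"
  unfolding zb_def
proof (intro g2_I allI impI)
  have le: "sum_list (take t \<alpha>) + \<alpha> ! t \<le> m" using off_le[OF assms(2)] assms(1) unfolding compositions_def by auto
  fix j :: nat assume "j \<notin> {1..m}"
  then show "(if inb (sum_list (take t \<alpha>)) (\<alpha> ! t) j then 1 else 0) = (0::real)"
    using le unfolding inb_def by auto
next
  have le: "sum_list (take t \<alpha>) + \<alpha> ! t \<le> m" using off_le[OF assms(2)] assms(1) unfolding compositions_def by auto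
  fix a b :: nat assume "a \<notin> {1..m} \<or> b \<notin> {1..m}"
  then show "(if inb (sum_list (take t \<alpha>)) (\<alpha> ! t) a \<and> inb (sum_list (take t \<alpha>)) (\<alpha> ! t) b then sg a b / 2 else 0) = (0::real)"
    using le unfolding inb_def by auto
next
  fix a b :: nat
  show "(if inb (sum_list (take t \<alpha>)) (\<alpha> ! t) a \<and> inb (sum_list (take t \<alpha>)) (\<alpha> ! t) b then sg a b / 2 else 0) =
     - (if inb (sum_list (take t \<alpha>)) (\<alpha> ! t) b \<and> inb (sum_list (take t \<alpha>)) (\<alpha> ! t) a then sg b a / 2 else (0::real))"
    unfolding sg_def by auto
qed

lemma W_entry:
  assumes a: "\<alpha> \<in> compositions m" and ne: "\<alpha> \<noteq> []" and i: "i < m" and j: "j < m"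
  shows "W \<alpha> (Suc i) (Suc j) =
    (if blk \<alpha> i = blk \<alpha> j then sg i j / (2 * length \<alpha>) else 0) + 1 / (2 * (real (length \<alpha>))^2)"
proof -
  define N where "N = length \<alpha>"
  define zs where "zs = map (\<lambda>i. zb \<alpha> (i - 1)) [1..<N + 1]"
  have m: "sum_list \<alpha> = m" using a unfolding compositions_def by auto
  have xs: "map (\<lambda>i. sig2 (Ax \<alpha> i)) [1..<length \<alpha> + 1] = map texp zs"
    unfolding zs_def N_def map_map o_def by (intro map_cong refl) (use sig_Ax[OF a] in auto)
  have zsg: "set zs \<subseteq> g2 m" unfolding zs_def N_def using zb_g2[OF a] by auto
  have zsne: "zs \<noteq> []" unfolding zs_def N_def using ne by (cases \<alpha>) auto
  have Wf: "W \<alpha> a b = mean2 zs a b + mean1 zs a * mean1 zs b / 2" for a b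
    unfolding W_def m xs bary_texp[OF zsg zsne] texp_simp by simp
  have lenzs: "length zs = N" unfolding zs_def by simp
  have inbk: "inb (sum_list (take t \<alpha>)) (\<alpha> ! t) (Suc k) \<longleftrightarrow> t = blk \<alpha> k" if "t < N" "k < m" for t k
    using blk_iff[of k \<alpha> t] that m unfolding inb_def N_def by auto
  have bl: "blk \<alpha> k < N" if "k < m" for k using blk_lt[of k \<alpha>] that m N_def by simp
  have upt_eq: "[1..<N + 1] = [Suc 0..<Suc N]" by simp
  have sl: "sum_list (map f zs) = (\<Sum>t<N. f (zb \<alpha> t))" for f :: "tens2 \<Rightarrow> real"
    unfolding zs_def map_map o_def upt_eq sum_list_upt1 by simp
  have m1: "mean1 zs (Suc k) = 1 / N" if "k < m" for k
  proof -
    have "sum_list (map (\<lambda>z. fst (snd z) (Suc k)) zs) = (\<Sum>t<N. if t = blk \<alpha> k then 1 else 0)"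
      unfolding sl by (intro sum.cong refl) (use inbk that in \<open>auto simp: zb_def\<close>)
    also have "\<dots> = 1" using bl[OF that] by simp
    finally show ?thesis unfolding mean1_def lenzs by simp
  qed
  have m2: "mean2 zs (Suc i) (Suc j) = (if blk \<alpha> i = blk \<alpha> j then sg i j / (2 * N) else 0)"
  proof -
    have "sum_list (map (\<lambda>z. snd (snd z) (Suc i) (Suc j)) zs) =
       (\<Sum>t<N. if t = blk \<alpha> i then (if blk \<alpha> i = blk \<alpha> j then sg i j / 2 else 0) else 0)"
      unfolding sl by (intro sum.cong refl) (use inbk i j in \<open>auto simp: zb_def sg_def\<close>)
    also have "\<dots> = (if blk \<alpha> i = blk \<alpha> j then sg i j / 2 else 0)" using bl[OF i] by simp
    finally show ?thesis unfolding mean2_def lenzs by simp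
  qed
  show ?thesis unfolding Wf m1[OF i] m1[OF j] m2 N_def[symmetric] by (simp add: power2_eq_square)
qed

lemma mv_entry:
  assumes "A \<in> carrier_mat n nc" "x \<in> carrier_vec nc" "r < n"
  shows "(A *\<^sub>v x) $ r = (\<Sum>j<nc. A $$ (r, j) * x $ j)"
  using assms by (auto simp: scalar_prod_def atLeast0LessThan intro!: sum.cong)

lemma (in vec_space) rank_by_kernel:
  fixes A :: "'a mat"
  assumes A: "A \<in> carrier_mat n nc" and J: "J \<subseteq> {..<nc}"
    and ker: "\<And>x. x \<in> carrier_vec nc \<Longrightarrow> A *\<^sub>v x = 0\<^sub>v n \<Longrightarrow> (\<And>j. j < nc \<Longrightarrow> j \<notin> J \<Longrightarrow> x $ j = 0) \<Longrightarrow> x = 0\<^sub>v nc"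
    and dep: "\<And>j. j < nc \<Longrightarrow> j \<notin> J \<Longrightarrow> \<exists>x \<in> carrier_vec nc. A *\<^sub>v x = 0\<^sub>v n \<and> x $ j = 1 \<and> (\<forall>i<nc. i \<notin> J \<longrightarrow> i \<noteq> j \<longrightarrow> x $ i = 0)"
  shows "rank A = card J"
proof -
  have fJ: "finite J" using J finite_subset by blast
  define js where "js = sorted_list_of_set J"
  define k where "k = card J"
  have js: "distinct js" "set js = J" "length js = k" unfolding js_def k_def using fJ by auto
  have jsnc: "c < k \<Longrightarrow> js ! c < nc" for c using js J nth_mem by (metis lessThan_iff subsetD)
  define B where "B = mat n k (\<lambda>(r, c). A $$ (r, js ! c))"
  have B: "B \<in> carrier_mat n k" unfolding B_def by simp
  have colB: "c < k \<Longrightarrow> col B c = col A (js ! c)" for c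
    unfolding B_def using A jsnc by (auto intro!: eq_vecI)
  have sumJ: "(\<Sum>i\<in>J. f i) = (\<Sum>c<k. f (js ! c))" for f :: "nat \<Rightarrow> 'a"
  proof -
    have "(\<Sum>i\<in>J. f i) = sum_list (map f js)" using js sum.distinct_set_conv_list[of js f] by simp
    also have "\<dots> = (\<Sum>c<k. f (js ! c))" using js by (simp add: sum_list_sum_nth atLeast0LessThan)
    finally show ?thesis .
  qed
  have kerB: "y = 0\<^sub>v k" if y: "y \<in> carrier_vec k" "B *\<^sub>v y = 0\<^sub>v n" for y
  proof -
    define x where "x = vec nc (\<lambda>i. \<Sum>c<k. if js ! c = i then y $ c else 0)"
    have x: "x \<in> carrier_vec nc" unfolding x_def by simp
    have xjs: "x $ (js ! c) = y $ c" if "c < k" for c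
    proof -
      have "x $ (js ! c) = (\<Sum>c'<k. if c' = c then y $ c' else 0)"
        unfolding x_def using jsnc[OF that] js(1,3) that by (auto intro!: sum.cong simp: nth_eq_iff_index_eq)
      then show ?thesis using that by simp
    qed
    have x0: "x $ i = 0" if "i < nc" "i \<notin> J" for i
      unfolding x_def using that js by (auto intro!: sum.neutral)
    have "A *\<^sub>v x = 0\<^sub>v n"
    proof (rule eq_vecI)
      fix r assume "r < dim_vec (0\<^sub>v n :: 'a vec)"
      then have r: "r < n" by simp
      have "(A *\<^sub>v x) $ r = (\<Sum>i<nc. A $$ (r, i) * x $ i)" by (rule mv_entry[OF A x r])
      also have "\<dots> = (\<Sum>i\<in>J. A $$ (r, i) * x $ i)"
        using J x0 by (intro sum.mono_neutral_right) auto
      also have "\<dots> = (\<Sum>c<k. A $$ (r, js ! c) * y $ c)" unfolding sumJ using xjs by simp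
      also have "\<dots> = (B *\<^sub>v y) $ r" using mv_entry[OF B y(1) r] unfolding B_def using r by simp
      finally show "(A *\<^sub>v x) $ r = 0\<^sub>v n $ r" using y(2) r by simp
    qed (use A in simp)
    then have "x = 0\<^sub>v nc" using ker[OF x] x0 by blast
    show ?thesis
    proof (rule eq_vecI)
      fix c assume "c < dim_vec (0\<^sub>v k :: 'a vec)"
      then have c: "c < k" by simp
      have "y $ c = x $ (js ! c)" using xjs[OF c] by simp
      also have "\<dots> = 0" using \<open>x = 0\<^sub>v nc\<close> jsnc[OF c] by simp
      finally show "y $ c = 0\<^sub>v k $ c" using c by simp
    qed (use y(1) in simp)
  qed
  have distB: "distinct (cols B)"
  proof (subst distinct_conv_nth, intro allI impI)
    fix c1 c2 assume c: "c1 < length (cols B)" "c2 < length (cols B)" "c1 \<noteq> c2"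
    then have c': "c1 < k" "c2 < k" using B by auto
    show "cols B ! c1 \<noteq> cols B ! c2"
    proof
      assume eq: "cols B ! c1 = cols B ! c2"
      define y where "y = vec k (\<lambda>c. if c = c1 then 1 else if c = c2 then -1 else (0::'a))"
      have y: "y \<in> carrier_vec k" unfolding y_def by simp
      have "B *\<^sub>v y = 0\<^sub>v n"
      proof (rule eq_vecI)
        fix r assume "r < dim_vec (0\<^sub>v n :: 'a vec)"
        then have r: "r < n" by simp
        have e: "B $$ (r, c1) = B $$ (r, c2)" using arg_cong[OF eq, of "\<lambda>v. v $ r"] c' B r by simp
        have "(B *\<^sub>v y) $ r = (\<Sum>c<k. B $$ (r, c) * y $ c)" by (rule mv_entry[OF B y r])
        also have "\<dots> = (\<Sum>c<k. (if c = c1 then B $$ (r, c) else 0) - (if c = c2 then B $$ (r, c) else 0))"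
          unfolding y_def using c(3) by (intro sum.cong) auto
        also have "\<dots> = B $$ (r, c1) - B $$ (r, c2)" using c' by (simp add: sum_subtractf)
        finally show "(B *\<^sub>v y) $ r = 0\<^sub>v n $ r" using e r by simp
      qed (use B in simp)
      then have "y = 0\<^sub>v k" using kerB y by blast
      then have "y $ c1 = 0" using c' by simp
      then show False unfolding y_def using c' by simp
    qed
  qed
  have indB: "lin_indpt (set (cols B))"
  proof
    assume "lin_dep (set (cols B))"
    then obtain y where "y \<in> carrier_vec k" "y \<noteq> 0\<^sub>v k" "B *\<^sub>v y = 0\<^sub>v n"
      using lin_depE[OF B _ distB] by blast
    then show False using kerB by blast
  qed
  have rankB: "rank B = k" by (rule lin_indpt_full_rank[OF B distB indB])
  have colsA: "set (cols A) \<subseteq> carrier_vec n" "set (cols B) \<subseteq> carrier_vec n" using A B cols_dim by blast+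
  have BA: "set (cols B) \<subseteq> set (cols A)"
  proof
    fix v assume "v \<in> set (cols B)"
    then obtain c where c: "c < k" "v = col B c" using B by (metis cols_length cols_nth in_set_conv_nth carrier_matD(2))
    then have "v = col A (js ! c)" using colB by simp
    then show "v \<in> set (cols A)" using jsnc[OF c(1)] A by (metis cols_length cols_nth nth_mem carrier_matD(2))
  qed
  have AB: "set (cols A) \<subseteq> span (set (cols B))"
  proof
    fix v assume "v \<in> set (cols A)"
    then obtain j where j: "j < nc" "v = col A j" using A by (metis cols_length cols_nth in_set_conv_nth carrier_matD(2))
    show "v \<in> span (set (cols B))"
    proof (cases "j \<in> J")
      case True
      then obtain c where c: "c < k" "js ! c = j" using js by (metis in_set_conv_nth)
      then have "v = col B c" using colB j by simp
      moreover have "col B c \<in> set (cols B)" using c B by (metis cols_length cols_nth nth_mem carrier_matD(2))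
      ultimately show ?thesis using span_mem[OF colsA(2)] by simp
    next
      case False
      obtain x where x: "x \<in> carrier_vec nc" "A *\<^sub>v x = 0\<^sub>v n" "x $ j = 1" "\<forall>i<nc. i \<notin> J \<longrightarrow> i \<noteq> j \<longrightarrow> x $ i = 0"
        using dep[OF j(1) False] by blast
      define y where "y = vec k (\<lambda>c. - x $ (js ! c))"
      have y: "y \<in> carrier_vec k" unfolding y_def by simp
      have "v = B *\<^sub>v y"
      proof (rule eq_vecI)
        fix r assume "r < dim_vec (B *\<^sub>v y)"
        then have r: "r < n" using B by simp
        have "0 = (A *\<^sub>v x) $ r" using x(2) r by simp
        also have "\<dots> = (\<Sum>i<nc. A $$ (r, i) * x $ i)" by (rule mv_entry[OF A x(1) r])
        also have "\<dots> = (\<Sum>i\<in>insert j J. A $$ (r, i) * x $ i)"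
          using J x(4) j(1) by (intro sum.mono_neutral_right) auto
        also have "\<dots> = A $$ (r, j) + (\<Sum>i\<in>J. A $$ (r, i) * x $ i)"
          using fJ False x(3) by simp
        also have "(\<Sum>i\<in>J. A $$ (r, i) * x $ i) = - (\<Sum>c<k. A $$ (r, js ! c) * y $ c)"
          unfolding sumJ y_def by (simp add: sum_negf[symmetric])
        also have "(\<Sum>c<k. A $$ (r, js ! c) * y $ c) = (B *\<^sub>v y) $ r"
          using mv_entry[OF B y r] unfolding B_def using r by simp
        finally have "A $$ (r, j) = (B *\<^sub>v y) $ r" by (simp add: eq_neg_iff_add_eq_0 add_eq_0_iff)
        then show "v $ r = (B *\<^sub>v y) $ r" using j A r by simp
      qed (use j A B in simp)
      also have "\<dots> = lincomb (\<lambda>a. y $ find_first a (cols B)) (set (cols B))"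
        using lincomb_eq_mat_mult[OF B y distB] by simp
      finally show ?thesis by (intro in_spanI) auto
    qed
  qed
  have "span (set (cols A)) = span (set (cols B))"
  proof
    show "span (set (cols B)) \<subseteq> span (set (cols A))" using BA by (rule span_is_monotone)
    show "span (set (cols A)) \<subseteq> span (set (cols B))"
      using AB by (intro span_is_subset span_is_submodule colsA(2))
  qed
  then have "rank A = rank B" unfolding rank_def by simp
  then show ?thesis using rankB k_def by simp
qed

lemma sg_shift: "sg (d + p) (d + q) = sg p q" unfolding sg_def by auto

lemma sgE:
  assumes "p < k"
  shows "(\<Sum>q<k. sg p q * f q) = (\<Sum>q<k. f q) - (\<Sum>q<Suc p. f q) - (\<Sum>q<p. f q :: real)"
proof -
  have "(\<Sum>q<k. sg p q * f q) = (\<Sum>q<k. f q - (if q < Suc p then f q else 0) - (if q < p then f q else 0))"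
    unfolding sg_def by (intro sum.cong) auto
  also have "\<dots> = (\<Sum>q<k. f q) - (\<Sum>q<k. if q < Suc p then f q else 0) - (\<Sum>q<k. if q < p then f q else 0)"
    by (simp add: sum_subtractf)
  also have "(\<Sum>q<k. if q < Suc p then f q else 0) = (\<Sum>q<Suc p. if q < Suc p then f q else 0)"
    using assms by (intro sum.mono_neutral_right) auto
  also have "\<dots> = (\<Sum>q<Suc p. f q)" by (intro sum.cong) auto
  also have "(\<Sum>q<k. if q < p then f q else 0) = (\<Sum>q<p. if q < p then f q else 0)"
    using assms by (intro sum.mono_neutral_right) auto
  also have "\<dots> = (\<Sum>q<p. f q)" by (intro sum.cong) auto
  finally show ?thesis .
qed

lemma alt_sum: "(\<Sum>q<n. (-1::real)^q) = (if odd n then 1 else 0)"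
  by (induction n) auto

lemma alt_sum_y: "(\<And>q. q < k \<Longrightarrow> y q = (-1)^q * y 0) \<Longrightarrow> n \<le> k \<Longrightarrow>
   (\<Sum>q<n. y q) = (if odd n then y 0 else (0::real))"
proof -
  assume h: "\<And>q. q < k \<Longrightarrow> y q = (-1)^q * y 0" and n: "n \<le> k"
  have "(\<Sum>q<n. y q) = (\<Sum>q<n. (-1)^q * y 0)"
  proof (rule sum.cong)
    fix q assume "q \<in> {..<n}"
    then have "q < k" using n by simp
    from h[OF this] show "y q = (-1)^q * y 0" .
  qed simp
  also have "\<dots> = (\<Sum>q<n. (-1::real)^q) * y 0" by (simp add: sum_distrib_right)
  finally show ?thesis unfolding alt_sum by simp
qed

lemma block_forward:
  assumes k: "0 < k" and eq: "\<And>p. p < k \<Longrightarrow> (\<Sum>q<k. sg p q * y q) + c = 0"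
  shows "\<forall>q<k. y q = (-1)^q * y 0" "if even k then c = y 0 else c = 0"
proof -
  have step: "y (Suc p) = - y p" if "Suc p < k" for p
  proof -
    have pk: "p < k" using that by simp
    have "(\<Sum>q<k. sg p q * y q) = (\<Sum>q<k. sg (Suc p) q * y q)" using eq[of p] eq[of "Suc p"] that by simp
    then have "(\<Sum>q<k. y q) - (\<Sum>q<Suc p. y q) - (\<Sum>q<p. y q) =
               (\<Sum>q<k. y q) - (\<Sum>q<Suc (Suc p). y q) - (\<Sum>q<Suc p. y q)"
      unfolding sgE[OF that] sgE[OF pk] .
    then have "(\<Sum>q<Suc (Suc p). y q) = (\<Sum>q<p. y q)" by linarith
    then show ?thesis by simp
  qed
  show alt: "\<forall>q<k. y q = (-1)^q * y 0"
  proof (intro allI impI)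
    fix q show "q < k \<Longrightarrow> y q = (-1)^q * y 0"
      by (induction q) (use step in auto)
  qed
  have "(\<Sum>q<k. sg 0 q * y q) + c = 0" using eq k by simp
  then have "(\<Sum>q<k. y q) - y 0 + c = 0" unfolding sgE[OF k] by simp
  moreover have "(\<Sum>q<k. y q) = (if odd k then y 0 else 0)"
  proof -
    have altq: "\<And>q. q < k \<Longrightarrow> y q = (-1)^q * y 0" using alt by blast
    show ?thesis using alt_sum_y[of k y k, OF altq] by simp
  qed
  ultimately show "if even k then c = y 0 else c = 0" by (cases "even k") auto
qed

lemma block_backward:
  assumes alt: "\<And>q. q < k \<Longrightarrow> y q = (-1)^q * y 0" and p: "p < k"
  shows "(\<Sum>q<k. sg p q * y q) = (if even k then - y 0 else 0)"
proof -
  have "(\<Sum>q<k. sg p q * y q) = (\<Sum>q<k. y q) - (\<Sum>q<Suc p. y q) - (\<Sum>q<p. y q)" by (rule sgE[OF p])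
  also have "\<dots> = (if odd k then y 0 else 0) - (if odd (Suc p) then y 0 else 0) - (if odd p then y 0 else 0)"
    using alt_sum_y[of k y k, OF alt] alt_sum_y[of k y "Suc p", OF alt] alt_sum_y[of k y p, OF alt] p by simp
  finally show ?thesis by auto
qed

definition off :: "nat list \<Rightarrow> nat \<Rightarrow> nat" where "off \<alpha> t = sum_list (take t \<alpha>)"

lemma sum_blocks: "(\<Sum>j<sum_list \<alpha>. g j) = (\<Sum>t<length \<alpha>. \<Sum>q<\<alpha> ! t. g (off \<alpha> t + q) :: real)"
proof (induction \<alpha> arbitrary: g)
  case Nil then show ?case by simp
next
  case (Cons x xs)
  have split: "(\<Sum>j<a + b. h j) = (\<Sum>j<a. h j) + (\<Sum>j<b. h (a + j))" for a b and h :: "nat \<Rightarrow> real"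
    by (induction b) auto
  have "(\<Sum>j<sum_list (x # xs). g j) = (\<Sum>j<x. g j) + (\<Sum>j<sum_list xs. g (x + j))"
    using split by simp
  also have "(\<Sum>j<sum_list xs. g (x + j)) = (\<Sum>t<length xs. \<Sum>q<xs ! t. g (x + (off xs t + q)))"
    using Cons.IH[of "\<lambda>j. g (x + j)"] .
  finally show ?case unfolding off_def
    by (simp only: length_Cons sum.lessThan_Suc_shift) (simp add: add.assoc)
qed

definition Mf :: "nat list \<Rightarrow> nat \<Rightarrow> nat \<Rightarrow> real" where
  "Mf \<alpha> i j = (if blk \<alpha> i = blk \<alpha> j then sg i j / (2 * real (length \<alpha>)) else 0) + 1 / (2 * real (length \<alpha>)^2)"

lemma blk_off: "t < length \<alpha> \<Longrightarrow> q < \<alpha> ! t \<Longrightarrow> blk \<alpha> (off \<alpha> t + q) = t \<and> off \<alpha> t + q < sum_list \<alpha>"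
proof -
  assume t: "t < length \<alpha>" and q: "q < \<alpha> ! t"
  have lt: "off \<alpha> t + q < sum_list (\<alpha>::nat list)" using off_le[OF t] q unfolding off_def by simp
  then have "t = blk \<alpha> (off \<alpha> t + q)" using blk_iff[OF lt t] q unfolding off_def by simp
  then show ?thesis using lt by simp
qed

lemma blk_pos: "i < sum_list \<alpha> \<Longrightarrow> off \<alpha> (blk \<alpha> i) \<le> i \<and> i < off \<alpha> (blk \<alpha> i) + \<alpha> ! blk \<alpha> i"
  using blk_iff[of i \<alpha> "blk \<alpha> i"] blk_lt[of i \<alpha>] unfolding off_def by simp

lemma KE:
  assumes ne: "\<alpha> \<noteq> []" and i: "i < sum_list \<alpha>"
  shows "(\<Sum>j<sum_list \<alpha>. Mf \<alpha> i j * x j) =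
     ((\<Sum>q<\<alpha> ! blk \<alpha> i. sg (i - off \<alpha> (blk \<alpha> i)) q * x (off \<alpha> (blk \<alpha> i) + q))
       + (\<Sum>j<sum_list \<alpha>. x j) / real (length \<alpha>)) / (2 * real (length \<alpha>))"
proof -
  define N where "N = real (length \<alpha>)"
  define t where "t = blk \<alpha> i"
  define p where "p = i - off \<alpha> t"
  have N0: "N > 0" using ne N_def by simp
  have tl: "t < length \<alpha>" using blk_lt[OF i] t_def by simp
  have ip: "i = off \<alpha> t + p" "p < \<alpha> ! t" using blk_pos[OF i] unfolding t_def p_def by auto
  have "(\<Sum>j<sum_list \<alpha>. Mf \<alpha> i j * x j) =
     (\<Sum>j<sum_list \<alpha>. (if blk \<alpha> j = t then sg i j * x j else 0)) / (2 * N) + (\<Sum>j<sum_list \<alpha>. x j) / (2 * N^2)"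
  proof -
    have "Mf \<alpha> i j * x j = (if blk \<alpha> j = t then sg i j * x j else 0) / (2 * N) + x j / (2 * N^2)" for j
      unfolding Mf_def N_def[symmetric] t_def by (cases "blk \<alpha> j = blk \<alpha> i") (simp_all add: distrib_right)
    then show ?thesis by (simp add: sum.distrib sum_divide_distrib[symmetric])
  qed
  also have "(\<Sum>j<sum_list \<alpha>. (if blk \<alpha> j = t then sg i j * x j else 0)) =
      (\<Sum>t'<length \<alpha>. \<Sum>q<\<alpha> ! t'. if blk \<alpha> (off \<alpha> t' + q) = t then sg i (off \<alpha> t' + q) * x (off \<alpha> t' + q) else 0)"
    by (rule sum_blocks)
  also have "\<dots> = (\<Sum>t'<length \<alpha>. if t' = t then (\<Sum>q<\<alpha> ! t. sg p q * x (off \<alpha> t + q)) else 0)"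
  proof (intro sum.cong refl)
    fix t' assume t': "t' \<in> {..<length \<alpha>}"
    show "(\<Sum>q<\<alpha> ! t'. if blk \<alpha> (off \<alpha> t' + q) = t then sg i (off \<alpha> t' + q) * x (off \<alpha> t' + q) else 0) =
      (if t' = t then (\<Sum>q<\<alpha> ! t. sg p q * x (off \<alpha> t + q)) else 0)"
    proof (cases "t' = t")
      case True
      then show ?thesis using blk_off[of t \<alpha>] tl unfolding ip(1) by (simp add: sg_shift)
    next
      case False
      then show ?thesis using blk_off[of t' \<alpha>] t' by (intro trans[OF sum.neutral]) auto
    qed
  qed
  also have "\<dots> = (\<Sum>q<\<alpha> ! t. sg p q * x (off \<alpha> t + q))" using tl by simp
  finally show ?thesis unfolding N_def[symmetric] t_def[symmetric] p_def[symmetric] using N0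
    by (simp add: field_simps power2_eq_square)
qed

lemma Wmat_entry:
  assumes a: "\<alpha> \<in> compositions m" and ne: "\<alpha> \<noteq> []" and i: "i < m" and j: "j < m"
  shows "W_mat m \<alpha> $$ (i, j) = Mf \<alpha> i j"
  unfolding W_mat_def Mf_def using W_entry[OF a ne i j] i j by simp

lemma sum_list_m: "\<alpha> \<in> compositions m \<Longrightarrow> sum_list \<alpha> = m"
  unfolding compositions_def by simp

lemma Wm_mult:
  assumes a: "\<alpha> \<in> compositions m" and ne: "\<alpha> \<noteq> []" and x: "x \<in> carrier_vec m" and i: "i < m"
  shows "(W_mat m \<alpha> *\<^sub>v x) $ i =
     ((\<Sum>q<\<alpha> ! blk \<alpha> i. sg (i - off \<alpha> (blk \<alpha> i)) q * x $ (off \<alpha> (blk \<alpha> i) + q))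
       + (\<Sum>j<m. x $ j) / real (length \<alpha>)) / (2 * real (length \<alpha>))" (is "_ = ?R")
proof -
  have Wc: "W_mat m \<alpha> \<in> carrier_mat m m" unfolding W_mat_def by simp
  have "(W_mat m \<alpha> *\<^sub>v x) $ i = (\<Sum>j<m. W_mat m \<alpha> $$ (i, j) * x $ j)" by (rule mv_entry[OF Wc x i])
  also have "\<dots> = (\<Sum>j<sum_list \<alpha>. Mf \<alpha> i j * x $ j)"
    using Wmat_entry[OF a ne i] sum_list_m[OF a] by simp
  also have "\<dots> = ?R" using KE[OF ne, of i "\<lambda>j. x $ j"] i sum_list_m[OF a] by simp
  finally show ?thesis .
qed

lemma ker_iff:
  assumes a: "\<alpha> \<in> compositions m" and ne: "\<alpha> \<noteq> []" and x: "x \<in> carrier_vec m"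
  shows "W_mat m \<alpha> *\<^sub>v x = 0\<^sub>v m \<longleftrightarrow>
    (\<forall>t<length \<alpha>. \<forall>p<\<alpha> ! t. (\<Sum>q<\<alpha> ! t. sg p q * x $ (off \<alpha> t + q)) + (\<Sum>j<m. x $ j) / real (length \<alpha>) = 0)"
proof -
  have N0: "real (length \<alpha>) > 0" using ne by simp
  have m: "sum_list \<alpha> = m" by (rule sum_list_m[OF a])
  show ?thesis
  proof
    assume h: "W_mat m \<alpha> *\<^sub>v x = 0\<^sub>v m"
    show "\<forall>t<length \<alpha>. \<forall>p<\<alpha> ! t. (\<Sum>q<\<alpha> ! t. sg p q * x $ (off \<alpha> t + q)) + (\<Sum>j<m. x $ j) / real (length \<alpha>) = 0"
    proof (intro allI impI)
      fix t p assume t: "t < length \<alpha>" and p: "p < \<alpha> ! t"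
      have bo: "blk \<alpha> (off \<alpha> t + p) = t" "off \<alpha> t + p < m" using blk_off[OF t p] m by auto
      have "(W_mat m \<alpha> *\<^sub>v x) $ (off \<alpha> t + p) = 0" using h bo(2) by simp
      then have "((\<Sum>q<\<alpha> ! t. sg p q * x $ (off \<alpha> t + q)) + (\<Sum>j<m. x $ j) / real (length \<alpha>)) / (2 * real (length \<alpha>)) = 0"
        using Wm_mult[OF a ne x bo(2)] bo(1) by simp
      then show "(\<Sum>q<\<alpha> ! t. sg p q * x $ (off \<alpha> t + q)) + (\<Sum>j<m. x $ j) / real (length \<alpha>) = 0"
        using N0 by simp
    qed
  next
    assume h: "\<forall>t<length \<alpha>. \<forall>p<\<alpha> ! t. (\<Sum>q<\<alpha> ! t. sg p q * x $ (off \<alpha> t + q)) + (\<Sum>j<m. x $ j) / real (length \<alpha>) = 0"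
    show "W_mat m \<alpha> *\<^sub>v x = 0\<^sub>v m"
    proof (rule eq_vecI)
      fix i assume "i < dim_vec (0\<^sub>v m :: real vec)"
      then have i: "i < m" by simp
      have bp: "blk \<alpha> i < length \<alpha>" "i - off \<alpha> (blk \<alpha> i) < \<alpha> ! blk \<alpha> i"
        using blk_lt[of i \<alpha>] blk_pos[of i \<alpha>] i m by auto
      show "(W_mat m \<alpha> *\<^sub>v x) $ i = 0\<^sub>v m $ i"
        unfolding Wm_mult[OF a ne x i] using h bp i by simp
    qed (simp add: W_mat_def)
  qed
qed

lemma block_decomp:
  assumes "i < sum_list \<alpha>"
  obtains t q where "t < length \<alpha>" "q < \<alpha> ! t" "i = off \<alpha> t + q"
  using blk_lt[OF assms] blk_pos[OF assms] by (metis le_add_diff_inverse nat_add_left_cancel_less)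

lemma length_le_sum: "\<forall>x\<in>set \<alpha>. 0 < x \<Longrightarrow> length \<alpha> \<le> sum_list (\<alpha>::nat list)"
  by (induction \<alpha>) auto

theorem corollary7p11:
  fixes m :: nat and \<alpha> :: "nat list"
  assumes "\<alpha> \<in> compositions m"
  shows "vec_space.rank m (W_mat m \<alpha>) =
           (if (\<forall>x\<in>set \<alpha>. even x) then m else m - num_odd \<alpha> + 1)"
proof (cases "\<alpha> = []")
  case True
  then have m0: "m = 0" using assms unfolding compositions_def by simp
  have "W_mat m \<alpha> \<in> carrier_mat m m" unfolding W_mat_def by simp
  then have "vec_space.rank m (W_mat m \<alpha>) \<le> 0" using vec_space.rank_le_nc m0 by metis
  then show ?thesis using True m0 by simp
next
  case False
  note a = assms
  note ne = False
  define N where "N = length \<alpha>"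
  have N0: "real N > 0" "N > 0" using ne N_def by auto
  have m: "sum_list \<alpha> = m" by (rule sum_list_m[OF a])
  have pos: "t < N \<Longrightarrow> 0 < \<alpha> ! t" for t using a unfolding compositions_def N_def by auto
  have Wc: "W_mat m \<alpha> \<in> carrier_mat m m" unfolding W_mat_def by simp
  have offt: "t < N \<Longrightarrow> off \<alpha> t + \<alpha> ! t \<le> m" for t using off_le[of t \<alpha>] m unfolding off_def N_def by simp
  have K: "(\<forall>t<N. \<forall>q<\<alpha> ! t. x $ (off \<alpha> t + q) = (-1)^q * x $ (off \<alpha> t)) \<and>
           (\<forall>t<N. if even (\<alpha> ! t) then (\<Sum>j<m. x $ j) / N = x $ (off \<alpha> t) else (\<Sum>j<m. x $ j) / N = 0)"
    if x: "x \<in> carrier_vec m" and kx: "W_mat m \<alpha> *\<^sub>v x = 0\<^sub>v m" for x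
  proof -
    have h: "\<forall>t<length \<alpha>. \<forall>p<\<alpha> ! t. (\<Sum>q<\<alpha> ! t. sg p q * x $ (off \<alpha> t + q)) + (\<Sum>j<m. x $ j) / real (length \<alpha>) = 0"
      using ker_iff[OF a ne x] kx by blast
    have bf: "(\<forall>q<\<alpha> ! t. x $ (off \<alpha> t + q) = (-1)^q * x $ (off \<alpha> t + 0)) \<and>
        (if even (\<alpha> ! t) then (\<Sum>j<m. x $ j) / N = x $ (off \<alpha> t + 0) else (\<Sum>j<m. x $ j) / N = 0)" if t: "t < N" for t
      using block_forward[OF pos[OF t], of "\<lambda>q. x $ (off \<alpha> t + q)" "(\<Sum>j<m. x $ j) / N"] h t
      unfolding N_def by blast
    then show ?thesis by simp
  qed
  have Ssum: "(\<Sum>j<m. x $ j) = (\<Sum>t<N. if odd (\<alpha> ! t) then x $ (off \<alpha> t) else 0)"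
    if alt: "\<forall>t<N. \<forall>q<\<alpha> ! t. x $ (off \<alpha> t + q) = (-1)^q * x $ (off \<alpha> t)" for x :: "real vec"
  proof -
    have "(\<Sum>j<m. x $ j) = (\<Sum>t<N. \<Sum>q<\<alpha> ! t. x $ (off \<alpha> t + q))"
      using sum_blocks[where \<alpha>=\<alpha> and g="\<lambda>j. x $ j"] m N_def by simp
    also have "\<dots> = (\<Sum>t<N. if odd (\<alpha> ! t) then x $ (off \<alpha> t) else 0)"
    proof (rule sum.cong[OF refl])
      fix t assume "t \<in> {..<N}"
      then have t: "t < N" by simp
      have altt: "\<And>q. q < \<alpha> ! t \<Longrightarrow> x $ (off \<alpha> t + q) = (-1)^q * x $ (off \<alpha> t + 0)" using alt t by simp
      show "(\<Sum>q<\<alpha> ! t. x $ (off \<alpha> t + q)) = (if odd (\<alpha> ! t) then x $ (off \<alpha> t) else 0)"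
        using alt_sum_y[of "\<alpha> ! t" "\<lambda>q. x $ (off \<alpha> t + q)", OF altt] by simp
    qed
    finally show ?thesis .
  qed
  have zero: "x = 0\<^sub>v m" if x: "x \<in> carrier_vec m" and alt: "\<forall>t<N. \<forall>q<\<alpha> ! t. x $ (off \<alpha> t + q) = (-1)^q * x $ (off \<alpha> t)"
    and z: "\<forall>t<N. x $ (off \<alpha> t) = 0" for x :: "real vec"
  proof (rule eq_vecI)
    fix j assume "j < dim_vec (0\<^sub>v m :: real vec)"
    then have j: "j < sum_list \<alpha>" using m by simp
    obtain t q where tq: "t < length \<alpha>" "q < \<alpha> ! t" "j = off \<alpha> t + q" using block_decomp[OF j] by blast
    show "x $ j = 0\<^sub>v m $ j" using alt z tq j m unfolding N_def by simp
  qed (use x in simp)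
  show ?thesis
  proof (cases "\<forall>x\<in>set \<alpha>. even x")
    case True
    have ev: "t < N \<Longrightarrow> even (\<alpha> ! t)" for t using True N_def by simp
    have "vec_space.rank m (W_mat m \<alpha>) = card {..<m}"
    proof (rule vec_space.rank_by_kernel[OF Wc subset_refl])
      fix x :: "real vec" assume x: "x \<in> carrier_vec m" and kx: "W_mat m \<alpha> *\<^sub>v x = 0\<^sub>v m"
      note Kx = K[OF x kx]
      have S0: "(\<Sum>j<m. x $ j) = 0" unfolding Ssum[OF conjunct1[OF Kx]] using ev by simp
      have "\<forall>t<N. x $ (off \<alpha> t) = 0" using conjunct2[OF Kx] ev S0 by force
      then show "x = 0\<^sub>v m" using zero[OF x conjunct1[OF Kx]] by blast
    qed auto
    then show ?thesis using True by simp
  next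
    case False
    define Od where "Od = {t. t < N \<and> odd (\<alpha> ! t)}"
    have Odfin: "finite Od" unfolding Od_def by simp
    have Odne: "Od \<noteq> {}" using False unfolding Od_def N_def by (auto simp: in_set_conv_nth)
    define t0 where "t0 = Min Od"
    have t0: "t0 \<in> Od" unfolding t0_def using Odfin Odne by simp
    define lst where "lst t = off \<alpha> t + (\<alpha> ! t - 1)" for t
    have lst_blk: "t < N \<Longrightarrow> blk \<alpha> (lst t) = t \<and> lst t < m" for t
      using blk_off[of t \<alpha> "\<alpha> ! t - 1"] pos m unfolding lst_def N_def by simp
    have lst_inj: "inj_on lst Od" unfolding Od_def by (rule inj_onI) (metis (mono_tags, lifting) lst_blk mem_Collect_eq)
    define L where "L = lst ` (Od - {t0})"
    define J where "J = {..<m} - L"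
    have LJ: "L \<subseteq> {..<m}" unfolding L_def Od_def using lst_blk by auto
    have JJ: "J \<subseteq> {..<m}" unfolding J_def by auto
    have rk: "vec_space.rank m (W_mat m \<alpha>) = card J"
    proof (rule vec_space.rank_by_kernel[OF Wc JJ])
      fix x :: "real vec" assume x: "x \<in> carrier_vec m" and kx: "W_mat m \<alpha> *\<^sub>v x = 0\<^sub>v m"
        and xJ: "\<And>j. j < m \<Longrightarrow> j \<notin> J \<Longrightarrow> x $ j = 0"
      note Kx = K[OF x kx]
      have c0: "(\<Sum>j<m. x $ j) / N = 0" using conjunct2[OF Kx] t0 unfolding Od_def by auto
      have nt0: "x $ (off \<alpha> t) = 0" if t: "t < N" "t \<noteq> t0" for t
      proof (cases "even (\<alpha> ! t)")
        case True then show ?thesis using conjunct2[OF Kx] c0 t by force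
      next
        case False
        then have tO: "t \<in> Od - {t0}" using t unfolding Od_def by auto
        have "lst t \<in> L" unfolding L_def using tO by blast
        then have "x $ (lst t) = 0" using xJ lst_blk t unfolding J_def by auto
        moreover have "x $ (lst t) = (-1)^(\<alpha> ! t - 1) * x $ (off \<alpha> t)"
        proof -
          have q: "\<alpha> ! t - 1 < \<alpha> ! t" using pos[OF t(1)] by simp
          show ?thesis unfolding lst_def using conjunct1[OF Kx] t(1) q by blast
        qed
        moreover have "even (\<alpha> ! t - 1)" using False pos[OF t(1)] by simp
        ultimately show ?thesis by simp
      qed
      have S0: "(\<Sum>j<m. x $ j) = 0" using c0 N0 by simp
      have "(\<Sum>t<N. if odd (\<alpha> ! t) then x $ (off \<alpha> t) else 0) = (\<Sum>t<N. if t = t0 then x $ (off \<alpha> t0) else 0)"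
        using nt0 t0 unfolding Od_def by (intro sum.cong) auto
      also have "\<dots> = x $ (off \<alpha> t0)" using t0 unfolding Od_def by simp
      finally have "x $ (off \<alpha> t0) = 0" using S0 Ssum[OF conjunct1[OF Kx]] by simp
      then have "\<forall>t<N. x $ (off \<alpha> t) = 0" using nt0 by metis
      then show "x = 0\<^sub>v m" using zero[OF x conjunct1[OF Kx]] by blast
    next
      fix j assume j: "j < m" "j \<notin> J"
      then have "j \<in> L" unfolding J_def by simp
      then obtain t1 where t1: "t1 \<in> Od" "t1 \<noteq> t0" "j = lst t1" unfolding L_def by blast
      have t1N: "t1 < N" "odd (\<alpha> ! t1)" using t1 unfolding Od_def by auto
      have t0N: "t0 < N" "odd (\<alpha> ! t0)" using t0 unfolding Od_def by auto
      define wf where "wf i = (if blk \<alpha> i = t1 then (-1::real) ^ (i - off \<alpha> t1)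
          else if blk \<alpha> i = t0 then - ((-1) ^ (i - off \<alpha> t0)) else 0)" for i
      define w where "w = Matrix.vec m wf"
      have wc: "w \<in> carrier_vec m" unfolding w_def by simp
      have wb: "w $ (off \<alpha> t + q) = (if t = t1 then (-1)^q else if t = t0 then - ((-1)^q) else 0)"
        if t: "t < N" "q < \<alpha> ! t" for t q
        using blk_off[of t \<alpha> q] t m unfolding w_def wf_def N_def by auto
      have Sw: "(\<Sum>j<m. w $ j) = 0"
      proof -
        have "(\<Sum>j<m. w $ j) = (\<Sum>t<N. \<Sum>q<\<alpha> ! t. w $ (off \<alpha> t + q))"
          using sum_blocks[where \<alpha>=\<alpha> and g="\<lambda>j. w $ j"] m N_def by simp
        also have "\<dots> = (\<Sum>t<N. (if t = t1 then 1 else 0) - (if t = t0 then 1 else 0))"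
        proof (rule sum.cong[OF refl])
          fix t assume "t \<in> {..<N}"
          then have t: "t < N" by simp
          have "(\<Sum>q<\<alpha> ! t. w $ (off \<alpha> t + q)) = (\<Sum>q<\<alpha> ! t. if t = t1 then (-1)^q else if t = t0 then - ((-1)^q) else 0)"
            using wb t by (intro sum.cong) auto
          also have "\<dots> = (if t = t1 then 1 else 0) - (if t = t0 then 1 else 0)"
            using t1N t0N t1(2) by (auto simp: sum_negf alt_sum)
          finally show "(\<Sum>q<\<alpha> ! t. w $ (off \<alpha> t + q)) = (if t = t1 then 1 else 0) - (if t = t0 then 1 else 0)" .
        qed
        also have "\<dots> = 0" using t1N t0N by (simp add: sum_subtractf)
        finally show ?thesis .
      qed
      have kw: "W_mat m \<alpha> *\<^sub>v w = 0\<^sub>v m"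
        unfolding ker_iff[OF a ne wc]
      proof (intro allI impI)
        fix t p assume t: "t < length \<alpha>" and p: "p < \<alpha> ! t"
        have tN: "t < N" using t N_def by simp
        have "(\<Sum>q<\<alpha> ! t. sg p q * w $ (off \<alpha> t + q)) = 0"
        proof (cases "t = t1 \<or> t = t0")
          case True
          define y0 where "y0 = (if t = t1 then 1 else - 1 :: real)"
          have y: "w $ (off \<alpha> t + q) = (-1)^q * y0" if "q < \<alpha> ! t" for q
            using wb[OF tN that] True unfolding y0_def by auto
          have "(\<Sum>q<\<alpha> ! t. sg p q * w $ (off \<alpha> t + q)) = (\<Sum>q<\<alpha> ! t. sg p q * ((-1)^q * y0))"
            using y by (intro sum.cong) auto
          also have "\<dots> = (if even (\<alpha> ! t) then - ((-1)^0 * y0) else 0)"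
            by (rule block_backward[OF _ p]) simp
          also have "\<dots> = 0" using True t1N t0N by auto
          finally show ?thesis .
        next
          case False
          then show ?thesis using wb[OF tN] by (intro sum.neutral) auto
        qed
        then show "(\<Sum>q<\<alpha> ! t. sg p q * w $ (off \<alpha> t + q)) + (\<Sum>j<m. w $ j) / real (length \<alpha>) = 0"
          using Sw by simp
      qed
      have wj: "w $ j = 1"
      proof -
        have "w $ j = (-1)^(\<alpha> ! t1 - 1)" using wb[OF t1N(1), of "\<alpha> ! t1 - 1"] pos[OF t1N(1)] t1(3)
          unfolding lst_def by simp
        moreover have "even (\<alpha> ! t1 - 1)" using t1N pos[OF t1N(1)] by simp
        ultimately show ?thesis by simp
      qed
      have wo: "\<forall>i<m. i \<notin> J \<longrightarrow> i \<noteq> j \<longrightarrow> w $ i = 0"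
      proof (intro allI impI)
        fix i assume i: "i < m" "i \<notin> J" "i \<noteq> j"
        then have "i \<in> L" unfolding J_def by simp
        then obtain t2 where t2: "t2 \<in> Od" "t2 \<noteq> t0" "i = lst t2" unfolding L_def by blast
        have t2N: "t2 < N" using t2 unfolding Od_def by simp
        have "t2 \<noteq> t1" using i(3) t2(3) t1(3) by auto
        then show "w $ i = 0" using lst_blk[OF t2N] t2 i(1) unfolding w_def wf_def by simp
      qed
      show "\<exists>x\<in>carrier_vec m. W_mat m \<alpha> *\<^sub>v x = 0\<^sub>v m \<and> x $ j = 1 \<and> (\<forall>i<m. i \<notin> J \<longrightarrow> i \<noteq> j \<longrightarrow> x $ i = 0)"
        using wc kw wj wo by blast
    qed
    have cardL: "card L = card Od - 1"
    proof -
      have "card L = card (Od - {t0})" unfolding L_def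
        by (rule card_image) (meson Diff_subset inj_on_subset lst_inj)
      also have "\<dots> = card Od - 1" using t0 Odfin by simp
      finally show ?thesis .
    qed
    have cardJ: "card J = m - card L" unfolding J_def using LJ by (simp add: card_Diff_subset finite_subset)
    have cO: "card Od = num_odd \<alpha>" unfolding Od_def num_odd_def N_def by (simp add: length_filter_conv_card)
    have O1: "card Od \<ge> 1" using Odne Odfin by (simp add: Suc_le_eq card_gt_0_iff)
    have Om: "card Od \<le> m"
    proof -
      have "card Od \<le> card {..<N}" unfolding Od_def by (intro card_mono) auto
      moreover have "N \<le> m" using length_le_sum[of \<alpha>] a m unfolding compositions_def N_def by simp
      ultimately show ?thesis by simp
    qed
    have ar: "m - (card Od - 1) = m - num_odd \<alpha> + 1" using O1 Om cO by linarith
    show ?thesis unfolding if_not_P[OF False] rk cardJ cardL ar ..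
  qed
qed

end
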